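(* Let $p\in[0,1]$, $\tau\in(0,1)$ and $\sigma>0$. Let $(\mathbf{a}_t)_{t\in\mathbb{Z}\setminus\{0\}}$ be i.i.d. random variables with $\Pr\{\mathbf{a}_t=+1\}=p$, $\Pr\{\mathbf{a}_t=-1\}=1-p$, let $g=\operatorname{sinc}$ and let $\mathbf{I}=\sum_{t\in\mathbb{Z}\setminus\{0\}}\mathbf{a}_t\,g(t-\tau)$ (almost surely convergent). Let $\mu=\mathbb{E}[\mathbf{I}]$ and $\mu_j=\mathbb{E}[(\mathbf{I}-\mu)^j]$ for $j\ge 0$ (so $\mu_0=1$). Then \[ \mathbb{E}\!\left[Q\!\left(\frac{g(\tau)-\mathbf{I}}{\sigma}\right)\right] =\frac12-\frac{1}{\sqrt{2\pi}\,\sigma}\sum_{n=0}^{\infty}\sum_{k=0}^{2n+1}\sum_{j=0}^{k} \frac{(2n-1)!!\,g(\tau)^{2n+1-k}(-1)^{n+k}\,\mu_j\,\mu^{k-j}}{\sigma^{2n}\,(2n+1-k)!\,j!\,(k-j)!}, \] \[ \mathbb{E}\!\left[Q\!\left(\frac{g(\tau)+\mathbf{I}}{\sigma}\right)\right] =\frac12-\frac{1}{\sqrt{2\pi}\,\sigma}\sum_{n=0}^{\infty}\sum_{k=0}^{2n+1}\sum_{j=0}^{k} \frac{(2n-1)!!\,g(\tau)^{2n+1-k}(-1)^{n}\,\mu_j\,\mu^{k-j}}{\sigma^{2n}\,(2n+1-k)!\,j!\,(k-j)!}. \]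
   Context: $\operatorname{sinc}(x)=\frac{\sin(\pi x)}{\pi x}$ for $x\ne0$, $\operatorname{sinc}(0)=1$. $Q(x)=\frac{1}{\sqrt{2\pi}}\int_x^\infty e^{-t^2/2}\,dt$ is the Gaussian tail function. The double factorial satisfies $(2n-1)!!=1\cdot3\cdots(2n-1)$ for $n\ge1$ and $(-1)!!=1$. *)

theory Defs
  imports "HOL-Probability.Probability"
begin

text \<open>Normalized sinc: sin(pi x)/(pi x), value 1 at 0.
  (Named nsinc to avoid clash with the unnormalized sinc of HOL-Probability.)\<close>
definition nsinc :: "real \<Rightarrow> real" where
  "nsinc x = (if x = 0 then 1 else sin (pi * x) / (pi * x))"

definition gaussQ :: "real \<Rightarrow> real" where
  "gaussQ x = (1 / sqrt (2 * pi)) * (LBINT t:{x..}. exp (- (t ^ 2) / 2))"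

text \<open>odd_dfact n = (2n-1)!! = 1*3*...*(2n-1), with odd_dfact 0 = (-1)!! = 1.\<close>
definition odd_dfact :: "nat \<Rightarrow> nat" where
  "odd_dfact n = (\<Prod>i<n. 2 * i + 1)"

text \<open>The interference I = sum over t in Z-{0} of a_t g(t - tau), taken as the limit
  of the symmetric partial sums over {-N..N}-{0}.\<close>
definition interf :: "(int \<Rightarrow> 'a \<Rightarrow> real) \<Rightarrow> real \<Rightarrow> 'a \<Rightarrow> real" where
  "interf a \<tau> \<omega> = lim (\<lambda>N::nat. \<Sum>t\<in>{- int N..int N} - {0}. a t \<omega> * nsinc (real_of_int t - \<tau>))"

end

theory Submission imports Defs begin

definition gc :: "nat \<Rightarrow> real" where
  "gc n = (-1)^n * real (odd_dfact n) / fact (2*n+1)"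

lemma odd_dfact_Suc: "odd_dfact (Suc n) = odd_dfact n * (2*n+1)"
  by (simp add: odd_dfact_def)

lemma odd_dfact_ratio: "real (odd_dfact n) / fact (2*n+1) = 1 / (2^n * fact n * (2*real n+1))"
proof (induction n)
  case 0 then show ?case by (simp add: odd_dfact_def)
next
  case (Suc n)
  have f1: "fact (2*Suc n+1) = (fact (2*n+1) :: real) * ((2*real n+2) * (2*real n+3))"
    by (simp add: algebra_simps)
  have o: "real (odd_dfact (Suc n)) = real (odd_dfact n) * (2*real n+1)"
    by (simp add: odd_dfact_Suc algebra_simps)
  have "real (odd_dfact (Suc n)) / fact (2*Suc n+1) = (real (odd_dfact n) / fact (2*n+1)) * ((2*real n+1) / ((2*real n+2)*(2*real n+3)))"
    unfolding o f1 by (simp only: times_divide_times_eq)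
  also have "\<dots> = 1 / (2^n * fact n * (2*real n+1)) * ((2*real n+1) / ((2*real n+2)*(2*real n+3)))" by (simp only: Suc.IH)
  also have "\<dots> = 1 / (2^n * fact n * ((2*real n+2)*(2*real n+3)))"
  proof -
    have u: "(2*real n+1) \<noteq> 0" by linarith
    have g: "1/(A*u)*(u/B) = 1/(A*B)" if "u \<noteq> 0" for A B u :: real
      using that by (cases "A=0"; cases "B=0") (simp_all add: field_simps)
    show ?thesis by (rule g[OF u])
  qed
  also have "2^n * fact n * ((2*real n+2)*(2*real n+3)) = (2^Suc n * fact (Suc n) * (2*real (Suc n)+1) :: real)"
    by (simp add: algebra_simps)
  finally show ?case .
qed

lemma gc_alt: "gc n = (-1)^n / (2^n * fact n * (2*real n+1))"
  unfolding gc_def using odd_dfact_ratio[of n] by (simp add: divide_simps)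

lemma abs_gc_term: "\<bar>gc n * x^(2*n+1)\<bar> \<le> \<bar>x\<bar> * ((x^2/2)^n / fact n)"
proof -
  have e: "\<bar>x\<bar>^(2*n+1) = \<bar>x\<bar> * (x^2)^n"
    by (simp add: power_mult power_abs)
  have "\<bar>gc n * x^(2*n+1)\<bar> = \<bar>x\<bar>^(2*n+1) / (2^n * fact n * (2*real n+1))"
    by (simp add: gc_alt abs_mult power_abs)
  also have "\<dots> = \<bar>x\<bar> * (x^2/2)^n / (fact n * (2*real n+1))"
    unfolding e by (simp add: power_divide)
  also have "\<dots> \<le> \<bar>x\<bar> * (x^2/2)^n / (fact n)"
    by (intro divide_left_mono mult_nonneg_nonneg) auto
  finally show ?thesis by simp
qed

lemma sums_exp_real: "(\<lambda>n. (y::real)^n / fact n) sums exp y"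
  using exp_converges[of y] by (simp add: divide_inverse mult.commute)

lemma summable_exp_sq: "summable (\<lambda>n. (y::real)^n / fact n)"
  using sums_exp_real sums_summable by blast

lemma suminf_exp_real: "(\<Sum>n. (y::real)^n / fact n) = exp y"
  using sums_exp_real sums_unique by metis

lemma summable_abs_gc: "summable (\<lambda>n. \<bar>gc n * x^(2*n+1)\<bar>)"
  by (rule summable_comparison_test[OF _ summable_mult[OF summable_exp_sq[of "x^2/2"], of "\<bar>x\<bar>"]])
     (intro exI[of _ 0] allI impI, unfold real_norm_def abs_abs, rule abs_gc_term)

lemma summable_gc: "summable (\<lambda>n. gc n * x^(2*n+1))"
  by (rule summable_rabs_cancel[OF summable_abs_gc])

lemma suminf_abs_gc_le: "(\<Sum>n. \<bar>gc n * x^(2*n+1)\<bar>) \<le> \<bar>x\<bar> * exp (x^2/2)"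
proof -
  have "(\<Sum>n. \<bar>gc n * x^(2*n+1)\<bar>) \<le> (\<Sum>n. \<bar>x\<bar> * ((x^2/2)^n / fact n))"
    by (rule suminf_le[OF abs_gc_term summable_abs_gc summable_mult[OF summable_exp_sq]])
  also have "\<dots> = \<bar>x\<bar> * exp (x^2/2)"
    by (subst suminf_mult[OF summable_exp_sq]) (simp only: suminf_exp_real)
  finally show ?thesis .
qed


definition erfs :: "real \<Rightarrow> real" where
  "erfs x = (\<Sum>n. gc n * x^(2*n+1))"

definition ec :: "nat \<Rightarrow> real" where
  "ec n = (-1)^n / (2^n * fact n)"

lemma ec_gc: "gc n * (2*real n+1) = ec n"
proof -
  have g: "x/(A*u)*u = x/A" if "u \<noteq> 0" for x A u :: real
    using that by (cases "A=0") (simp_all add: field_simps)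
  have "(2*real n+1) \<noteq> 0" by linarith
  from g[OF this] show ?thesis unfolding gc_alt ec_def by simp
qed

lemma sums_exp_neg_sq: "(\<lambda>n. ec n * t^(2*n)) sums exp (-(t^2)/2)"
proof -
  have "(\<lambda>n. (-(t^2)/2)^n / fact n) sums exp (-(t^2)/2)" by (rule sums_exp_real)
  moreover have "(-(t^2)/2)^n / fact n = ec n * t^(2*n)" for n
  proof -
    have e1: "-(t^2)/2 = (-1) * ((t^2) / 2)" by simp
    have "(-(t^2)/2)^n / fact n = ((-1)^n * ((t^2)^n / 2^n)) / fact n"
      by (simp only: e1 power_mult_distrib power_divide)
    also have "(t^2)^n = t^(2*n)" by (simp only: power_mult)
    finally show ?thesis by (simp add: ec_def)
  qed
  ultimately show ?thesis by simp
qed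

lemma abs_ec_term: "\<bar>ec n * t^(2*n)\<bar> = (t^2/2)^n / fact n"
proof -
  have "\<bar>ec n * t^(2*n)\<bar> = \<bar>t\<bar>^(2*n) / (2^n * fact n)"
    by (simp add: ec_def abs_mult power_abs)
  also have "\<bar>t\<bar>^(2*n) = (t^2)^n" by (simp only: power_mult power2_abs)
  finally show ?thesis by (simp add: power_divide)
qed

lemma integral_exp_neg_sq_Icc:
  assumes ab: "a \<le> b"
  shows "integral\<^sup>L lborel (\<lambda>t. exp (-(t^2)/2) * indicator {a..b} t) = erfs b - erfs a"
proof -
  define f where "f n t = ec n * t^(2*n) * indicator {a..b} t" for n t
  have int: "integrable lborel (f n)" for n
    unfolding f_def by (rule borel_integrable_atLeastAtMost) (intro continuous_intros)
  have intf: "integral\<^sup>L lborel (f n) = gc n * b^(2*n+1) - gc n * a^(2*n+1)" for n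
  proof -
    have "integral\<^sup>L lborel (f n) = integral\<^sup>L lborel (\<lambda>t. indicator {a..b} t *\<^sub>R (ec n * t^(2*n)))"
      unfolding f_def by (simp add: mult.commute)
    also have "\<dots> = gc n * b^(2*n+1) - gc n * a^(2*n+1)"
    proof (rule integral_FTC_atLeastAtMost[OF ab])
      fix x assume "a \<le> x" "x \<le> b"
      have d: "((\<lambda>t. gc n * t^(2*n+1)) has_real_derivative gc n * (real (2*n+1) * x^(2*n))) (at x within {a..b})"
        by (intro derivative_eq_intros) auto
      have eq: "gc n * (real (2*n+1) * x^(2*n)) = ec n * x^(2*n)"
        by (subst ec_gc[symmetric]) (simp add: algebra_simps)
      show "((\<lambda>t. gc n * t^(2*n+1)) has_vector_derivative ec n * x^(2*n)) (at x within {a..b})"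
        using d[unfolded eq] by (rule has_real_derivative_iff_has_vector_derivative[THEN iffD1])
    qed (intro continuous_intros)
    finally show ?thesis .
  qed
  define C where "C = (a^2 + b^2)/2"
  have C: "C \<ge> 0" unfolding C_def by simp
  have nf: "norm (f n t) = (t^2/2)^n / fact n * indicator {a..b} t" for n t
  proof (cases "t \<in> {a..b}")
    case True
    then have "norm (f n t) = \<bar>ec n * t^(2*n)\<bar>" by (simp add: f_def)
    then show ?thesis using True by (simp add: abs_ec_term)
  qed (simp add: f_def)
  have nb: "norm (f n t) \<le> C^n / fact n * indicator {a..b} t" for n t
  proof (cases "t \<in> {a..b}")
    case True
    then have "\<bar>t\<bar> \<le> \<bar>a\<bar> \<or> \<bar>t\<bar> \<le> \<bar>b\<bar>" by auto
    then have "t^2 \<le> a^2 \<or> t^2 \<le> b^2" by (simp add: abs_le_square_iff)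
    then have "t^2 \<le> a^2 + b^2" by (auto intro: add_increasing2 add_increasing)
    then have "(t^2/2)^n \<le> C^n" unfolding C_def by (intro power_mono) auto
    then have "(t^2/2)^n / fact n \<le> C^n / fact n" by (intro divide_right_mono) auto
    then show ?thesis using True unfolding nf by simp
  qed (simp add: f_def)
  have ib: "integral\<^sup>L lborel (\<lambda>t. norm (f n t)) \<le> C^n / fact n * (b - a)" for n
  proof -
    have "integral\<^sup>L lborel (\<lambda>t. norm (f n t)) \<le> integral\<^sup>L lborel (\<lambda>t. C^n / fact n * indicator {a..b} t)"
      by (intro integral_mono nb integrable_norm int integrable_mult_right) (simp add: ab)
    also have "\<dots> = C^n / fact n * (b - a)" using ab by simp
    finally show ?thesis .
  qed
  have ib2: "norm (integral\<^sup>L lborel (\<lambda>t. norm (f n t))) \<le> C^n / fact n * (b - a)" for n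
  proof -
    have "0 \<le> integral\<^sup>L lborel (\<lambda>t. norm (f n t))" by (rule integral_nonneg_AE) simp
    then show ?thesis using ib[of n] by simp
  qed
  have sum1: "summable (\<lambda>n. integral\<^sup>L lborel (\<lambda>t. norm (f n t)))"
    by (rule summable_comparison_test[OF _ summable_mult2[OF summable_exp_sq[of C], of "b - a"]])
       (intro exI[of _ 0] allI impI ib2)
  have sum2: "AE t in lborel. summable (\<lambda>n. norm (f n t))"
  proof (intro AE_I2)
    fix t
    show "summable (\<lambda>n. norm (f n t))"
      using summable_mult2[OF summable_exp_sq[of "t^2/2"], of "indicator {a..b} t"] unfolding nf by simp
  qed
  have pt: "(\<Sum>n. f n t) = exp (-(t^2)/2) * indicator {a..b} t" for t
    unfolding f_def using sums_unique[OF sums_mult2[OF sums_exp_neg_sq[of t], of "indicator {a..b} t"]]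
    by simp
  have "integral\<^sup>L lborel (\<lambda>t. exp (-(t^2)/2) * indicator {a..b} t) = integral\<^sup>L lborel (\<lambda>t. \<Sum>n. f n t)"
    by (simp add: pt)
  also have "\<dots> = (\<Sum>n. integral\<^sup>L lborel (f n))"
    by (rule integral_suminf[OF int sum2 sum1])
  also have "\<dots> = (\<Sum>n. gc n * b^(2*n+1) - gc n * a^(2*n+1))" by (simp add: intf)
  also have "\<dots> = erfs b - erfs a"
    unfolding erfs_def by (rule suminf_diff[OF summable_gc summable_gc, symmetric])
  finally show ?thesis .
qed


lemma erfs_0[simp]: "erfs 0 = 0"
  unfolding erfs_def by simp

lemma integrable_gauss: "integrable lborel (\<lambda>t::real. exp (-(t^2)/2))"
proof -
  have "integrable lborel (\<lambda>t. sqrt (2*pi) * normal_density 0 1 t)"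
    by (intro integrable_mult_right integrable_normal_density) simp
  moreover have "sqrt (2*pi) * normal_density 0 1 t = exp (-(t^2)/2)" for t
  proof -
    have "sqrt (2*pi) > 0" by simp
    then show ?thesis unfolding normal_density_def by (simp add: field_simps)
  qed
  ultimately show ?thesis by simp
qed

lemma integrable_gauss_ind:
  assumes "A \<in> sets borel"
  shows "integrable lborel (\<lambda>t::real. exp (-(t^2)/2) * indicator A t)"
proof -
  have "integrable lborel (\<lambda>t::real. indicator A t *\<^sub>R exp (-(t^2)/2))"
    by (rule integrable_mult_indicator) (use assms integrable_gauss in simp_all)
  then show ?thesis by (simp add: mult.commute)
qed

lemma integral_gauss_half: "integral\<^sup>L lborel (\<lambda>t::real. exp (-(t^2)/2) * indicator {0..} t) = sqrt (2*pi) / 2"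
proof -
  have c: "sqrt 2 \<noteq> (0::real)" by simp
  have 1: "integral\<^sup>L lborel (\<lambda>t::real. exp (-(t^2)/2) * indicator {0..} t)
      = \<bar>sqrt 2\<bar> *\<^sub>R integral\<^sup>L lborel (\<lambda>x. exp (-((0 + sqrt 2 * x)^2)/2) * indicator {0..} (0 + sqrt 2 * x))"
    by (rule lborel_integral_real_affine[OF c])
  have 2: "exp (-((0 + sqrt 2 * x)^2)/2) * indicator {0..} (0 + sqrt 2 * x) = indicator {0..} x *\<^sub>R exp (-(x^2))" for x :: real
    by (simp add: power_mult_distrib indicator_def zero_le_mult_iff)
  have 3: "integral\<^sup>L lborel (\<lambda>x::real. indicator {0..} x *\<^sub>R exp (-(x^2))) = sqrt pi / 2"
    using gaussian_moment_0 by (rule has_bochner_integral_integral_eq)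
  show ?thesis unfolding 1 2 3 by (simp add: real_sqrt_mult)
qed

lemma gaussQ_series: "gaussQ x = 1/2 - erfs x / sqrt (2*pi)"
proof -
  let ?e = "\<lambda>t::real. exp (-(t^2)/2)"
  have L: "(LBINT t:{x..}. exp (- (t ^ 2) / 2)) = integral\<^sup>L lborel (\<lambda>t. ?e t * indicator {x..} t)"
    unfolding set_lebesgue_integral_def by (simp add: mult.commute)
  have main: "integral\<^sup>L lborel (\<lambda>t. ?e t * indicator {x..} t) = sqrt (2*pi)/2 - erfs x"
  proof (cases "x \<ge> 0")
    case True
    have "integral\<^sup>L lborel (\<lambda>t. ?e t * indicator {0..} t)
        = integral\<^sup>L lborel (\<lambda>t. ?e t * indicator {0..x} t + ?e t * indicator {x..} t)"
    proof (rule integral_cong_AE)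
      show "AE t in lborel. ?e t * indicator {0..} t = ?e t * indicator {0..x} t + ?e t * indicator {x..} t"
        using AE_lborel_singleton[of x] by eventually_elim (use True in \<open>auto simp: indicator_def\<close>)
    qed auto
    also have "\<dots> = integral\<^sup>L lborel (\<lambda>t. ?e t * indicator {0..x} t) + integral\<^sup>L lborel (\<lambda>t. ?e t * indicator {x..} t)"
      by (intro Bochner_Integration.integral_add integrable_gauss_ind) auto
    finally show ?thesis using integral_exp_neg_sq_Icc[OF True] integral_gauss_half by simp
  next
    case False
    have "integral\<^sup>L lborel (\<lambda>t. ?e t * indicator {x..} t)
        = integral\<^sup>L lborel (\<lambda>t. ?e t * indicator {x..0} t + ?e t * indicator {0..} t)"
    proof (rule integral_cong_AE)
      show "AE t in lborel. ?e t * indicator {x..} t = ?e t * indicator {x..0} t + ?e t * indicator {0..} t"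
        using AE_lborel_singleton[of 0] by eventually_elim (use False in \<open>auto simp: indicator_def\<close>)
    qed auto
    also have "\<dots> = integral\<^sup>L lborel (\<lambda>t. ?e t * indicator {x..0} t) + integral\<^sup>L lborel (\<lambda>t. ?e t * indicator {0..} t)"
      by (intro Bochner_Integration.integral_add integrable_gauss_ind) auto
    finally show ?thesis using integral_exp_neg_sq_Icc[of x 0] False integral_gauss_half by simp
  qed
  have p: "sqrt (2*pi) > (0::real)" by simp
  show ?thesis unfolding gaussQ_def L main using p by (simp add: field_simps)
qed


lemma abs_le_exp_half_sq: "\<bar>y::real\<bar> \<le> exp (y^2/2)"
proof -
  have "\<bar>y\<bar> \<le> 1 + y^2/2"
  proof -
    have "0 \<le> (\<bar>y\<bar> - 1)^2" by simp
    then show ?thesis by (simp add: power2_eq_square algebra_simps)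
  qed
  also have "\<dots> \<le> exp (y^2/2)" by (rule exp_ge_add_one_self)
  finally show ?thesis .
qed

lemma suminf_abs_gc_le2: "(\<Sum>n. \<bar>gc n * y^(2*n+1)\<bar>) \<le> exp (y^2)"
proof -
  have "(\<Sum>n. \<bar>gc n * y^(2*n+1)\<bar>) \<le> \<bar>y\<bar> * exp (y^2/2)" by (rule suminf_abs_gc_le)
  also have "\<dots> \<le> exp (y^2/2) * exp (y^2/2)"
    by (rule mult_right_mono[OF abs_le_exp_half_sq]) simp
  also have "\<dots> = exp (y^2)" by (simp flip: exp_add)
  finally show ?thesis .
qed

lemma partial_abs_gc_le: "\<bar>\<Sum>n<N. gc n * y^(2*n+1)\<bar> \<le> exp (y^2)"
proof -
  have "\<bar>\<Sum>n<N. gc n * y^(2*n+1)\<bar> \<le> (\<Sum>n<N. \<bar>gc n * y^(2*n+1)\<bar>)" by (rule sum_abs)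
  also have "\<dots> \<le> (\<Sum>n. \<bar>gc n * y^(2*n+1)\<bar>)"
    by (rule sum_le_suminf[OF summable_abs_gc]) auto
  also have "\<dots> \<le> exp (y^2)" by (rule suminf_abs_gc_le2)
  finally show ?thesis .
qed

lemma gaussQ_expectation:
  fixes M :: "'a measure" and Y :: "'a \<Rightarrow> real"
  assumes P: "prob_space M" and Ym[measurable]: "Y \<in> borel_measurable M"
    and iY: "integrable M (\<lambda>\<omega>. exp ((Y \<omega>)^2))"
  shows "(\<lambda>n. gc n * integral\<^sup>L M (\<lambda>\<omega>. (Y \<omega>)^(2*n+1))) sums integral\<^sup>L M (\<lambda>\<omega>. erfs (Y \<omega>))"
    and "integral\<^sup>L M (\<lambda>\<omega>. gaussQ (Y \<omega>)) = 1/2 - integral\<^sup>L M (\<lambda>\<omega>. erfs (Y \<omega>)) / sqrt (2*pi)"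
    and "integrable M (\<lambda>\<omega>. erfs (Y \<omega>))"
proof -
  interpret prob_space M by (rule P)
  define s where "s N \<omega> = (\<Sum>n<N. gc n * (Y \<omega>)^(2*n+1))" for N \<omega>
  have sm[measurable]: "s N \<in> borel_measurable M" for N unfolding s_def by measurable
  have em[measurable]: "(\<lambda>\<omega>. erfs (Y \<omega>)) \<in> borel_measurable M" unfolding erfs_def by measurable
  have lim: "AE \<omega> in M. (\<lambda>N. s N \<omega>) \<longlonglongrightarrow> erfs (Y \<omega>)"
    unfolding s_def erfs_def by (intro AE_I2 summable_LIMSEQ summable_gc)
  have bd: "AE \<omega> in M. norm (s N \<omega>) \<le> exp ((Y \<omega>)^2)" for N
    unfolding s_def by (intro AE_I2, unfold real_norm_def, rule partial_abs_gc_le)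
  have ie: "integrable M (\<lambda>\<omega>. erfs (Y \<omega>))"
    by (rule integrable_dominated_convergence[OF em sm iY lim bd])
  have isN: "integrable M (s N)" for N
    by (rule integrable_dominated_convergence2[OF em sm iY lim bd])
  have conv: "(\<lambda>N. integral\<^sup>L M (s N)) \<longlonglongrightarrow> integral\<^sup>L M (\<lambda>\<omega>. erfs (Y \<omega>))"
    by (rule integral_dominated_convergence[OF em sm iY lim bd])
  have ipow: "integrable M (\<lambda>\<omega>. gc n * (Y \<omega>)^(2*n+1))" for n
  proof -
    have "integrable M (\<lambda>\<omega>. s (Suc n) \<omega> - s n \<omega>)" using isN by auto
    moreover have "s (Suc n) \<omega> - s n \<omega> = gc n * (Y \<omega>)^(2*n+1)" for \<omega> unfolding s_def by simp
    ultimately show ?thesis by simp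
  qed
  have "integral\<^sup>L M (s N) = (\<Sum>n<N. gc n * integral\<^sup>L M (\<lambda>\<omega>. (Y \<omega>)^(2*n+1)))" for N
  proof -
    have "integral\<^sup>L M (s N) = (\<Sum>n<N. integral\<^sup>L M (\<lambda>\<omega>. gc n * (Y \<omega>)^(2*n+1)))"
      unfolding s_def by (rule Bochner_Integration.integral_sum) (use ipow in auto)
    also have "\<dots> = (\<Sum>n<N. gc n * integral\<^sup>L M (\<lambda>\<omega>. (Y \<omega>)^(2*n+1)))" by simp
    finally show ?thesis .
  qed
  with conv show "(\<lambda>n. gc n * integral\<^sup>L M (\<lambda>\<omega>. (Y \<omega>)^(2*n+1))) sums integral\<^sup>L M (\<lambda>\<omega>. erfs (Y \<omega>))"
    unfolding sums_def by simp
  show "integrable M (\<lambda>\<omega>. erfs (Y \<omega>))" by (rule ie)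
  have "integral\<^sup>L M (\<lambda>\<omega>. gaussQ (Y \<omega>)) = integral\<^sup>L M (\<lambda>\<omega>. 1/2 - erfs (Y \<omega>) / sqrt (2*pi))"
    by (simp add: gaussQ_series)
  also have "\<dots> = integral\<^sup>L M (\<lambda>\<omega>. 1/2) - integral\<^sup>L M (\<lambda>\<omega>. erfs (Y \<omega>) / sqrt (2*pi))"
    by (rule Bochner_Integration.integral_diff) (use ie in auto)
  also have "\<dots> = 1/2 - integral\<^sup>L M (\<lambda>\<omega>. erfs (Y \<omega>)) / sqrt (2*pi)"
    using prob_space.prob_space[OF P] by simp
  finally show "integral\<^sup>L M (\<lambda>\<omega>. gaussQ (Y \<omega>)) = 1/2 - integral\<^sup>L M (\<lambda>\<omega>. erfs (Y \<omega>)) / sqrt (2*pi)" .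
qed


lemma binom_expand_pt:
  fixes g s x \<mu> :: real
  shows "(g + s*x)^m / fact m = (\<Sum>k\<le>m. \<Sum>j\<le>k. g^(m-k) * s^k * (x-\<mu>)^j * \<mu>^(k-j) / (fact (m-k) * fact j * fact (k-j)))"
proof -
  have xk: "x^k = (\<Sum>j\<le>k. of_nat (k choose j) * (x-\<mu>)^j * \<mu>^(k-j))" for k
    using binomial_ring[of "x-\<mu>" \<mu> k] by simp
  have "(g + s*x)^m = (s*x + g)^m" by (simp add: add.commute)
  also have "\<dots> = (\<Sum>k\<le>m. of_nat (m choose k) * (s*x)^k * g^(m-k))" by (rule binomial_ring)
  finally have "(g + s*x)^m / fact m = (\<Sum>k\<le>m. of_nat (m choose k) * (s*x)^k * g^(m-k) / fact m)"
    by (simp add: sum_divide_distrib)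
  also have "\<dots> = (\<Sum>k\<le>m. \<Sum>j\<le>k. g^(m-k) * s^k * (x-\<mu>)^j * \<mu>^(k-j) / (fact (m-k) * fact j * fact (k-j)))"
  proof (rule sum.cong[OF refl])
    fix k assume k: "k \<in> {..m}"
    have "of_nat (m choose k) * (s*x)^k * g^(m-k) / fact m = g^(m-k) * s^k / (fact k * fact (m-k)) * x^k"
      using k by (simp add: binomial_fact power_mult_distrib field_simps)
    also have "\<dots> = (\<Sum>j\<le>k. g^(m-k) * s^k / (fact k * fact (m-k)) * (of_nat (k choose j) * (x-\<mu>)^j * \<mu>^(k-j)))"
      unfolding xk by (rule sum_distrib_left)
    also have "\<dots> = (\<Sum>j\<le>k. g^(m-k) * s^k * (x-\<mu>)^j * \<mu>^(k-j) / (fact (m-k) * fact j * fact (k-j)))"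
    proof (rule sum.cong[OF refl])
      fix j assume j: "j \<in> {..k}"
      then show "g^(m-k) * s^k / (fact k * fact (m-k)) * (of_nat (k choose j) * (x-\<mu>)^j * \<mu>^(k-j))
          = g^(m-k) * s^k * (x-\<mu>)^j * \<mu>^(k-j) / (fact (m-k) * fact j * fact (k-j))"
        by (simp add: binomial_fact field_simps)
    qed
    finally show "of_nat (m choose k) * (s*x)^k * g^(m-k) / fact m = (\<Sum>j\<le>k. g^(m-k) * s^k * (x-\<mu>)^j * \<mu>^(k-j) / (fact (m-k) * fact j * fact (k-j)))" .
  qed
  finally show ?thesis .
qed

lemma moment_expand:
  fixes M :: "'a measure" and X :: "'a \<Rightarrow> real"
  assumes iX: "\<And>j. integrable M (\<lambda>\<omega>. (X \<omega> - \<mu>)^j)"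
  shows "integral\<^sup>L M (\<lambda>\<omega>. (g + s * X \<omega>)^m) / fact m =
    (\<Sum>k\<le>m. \<Sum>j\<le>k. g^(m-k) * s^k * integral\<^sup>L M (\<lambda>\<omega>. (X \<omega> - \<mu>)^j) * \<mu>^(k-j) / (fact (m-k) * fact j * fact (k-j)))"
proof -
  have "integral\<^sup>L M (\<lambda>\<omega>. (g + s * X \<omega>)^m) / fact m = integral\<^sup>L M (\<lambda>\<omega>. (g + s * X \<omega>)^m / fact m)"
    by simp
  also have "\<dots> = integral\<^sup>L M (\<lambda>\<omega>. \<Sum>k\<le>m. \<Sum>j\<le>k. (g^(m-k) * s^k * \<mu>^(k-j) / (fact (m-k) * fact j * fact (k-j))) * (X \<omega> - \<mu>)^j)"
    by (simp only: binom_expand_pt[of g s _ m \<mu>]) (simp add: field_simps)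
  also have "\<dots> = (\<Sum>k\<le>m. integral\<^sup>L M (\<lambda>\<omega>. \<Sum>j\<le>k. (g^(m-k) * s^k * \<mu>^(k-j) / (fact (m-k) * fact j * fact (k-j))) * (X \<omega> - \<mu>)^j))"
    by (rule Bochner_Integration.integral_sum) (intro Bochner_Integration.integrable_sum integrable_mult_right iX)
  also have "\<dots> = (\<Sum>k\<le>m. \<Sum>j\<le>k. integral\<^sup>L M (\<lambda>\<omega>. (g^(m-k) * s^k * \<mu>^(k-j) / (fact (m-k) * fact j * fact (k-j))) * (X \<omega> - \<mu>)^j))"
    by (intro sum.cong refl Bochner_Integration.integral_sum) (intro integrable_mult_right iX)
  also have "\<dots> = (\<Sum>k\<le>m. \<Sum>j\<le>k. g^(m-k) * s^k * integral\<^sup>L M (\<lambda>\<omega>. (X \<omega> - \<mu>)^j) * \<mu>^(k-j) / (fact (m-k) * fact j * fact (k-j)))"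
    by (intro sum.cong refl) (simp add: field_simps)
  finally show ?thesis .
qed

lemma term_eq:
  fixes M :: "'a measure" and X :: "'a \<Rightarrow> real"
  assumes iX: "\<And>j. integrable M (\<lambda>\<omega>. (X \<omega> - \<mu>)^j)" and \<sigma>: "\<sigma> > 0"
  shows "(\<Sum>k\<le>2*n+1. \<Sum>j\<le>k.
            real (odd_dfact n) * g ^ (2*n+1-k) * (-1) ^ (n+k) * integral\<^sup>L M (\<lambda>\<omega>. (X \<omega> - \<mu>)^j) * \<mu> ^ (k-j)
            / (\<sigma> ^ (2*n) * fact (2*n+1-k) * fact j * fact (k-j)))
      = \<sigma> * (gc n * integral\<^sup>L M (\<lambda>\<omega>. ((g - X \<omega>)/\<sigma>)^(2*n+1)))"
    and "(\<Sum>k\<le>2*n+1. \<Sum>j\<le>k.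
            real (odd_dfact n) * g ^ (2*n+1-k) * (-1) ^ n * integral\<^sup>L M (\<lambda>\<omega>. (X \<omega> - \<mu>)^j) * \<mu> ^ (k-j)
            / (\<sigma> ^ (2*n) * fact (2*n+1-k) * fact j * fact (k-j)))
      = \<sigma> * (gc n * integral\<^sup>L M (\<lambda>\<omega>. ((g + X \<omega>)/\<sigma>)^(2*n+1)))"
proof -
  define m where "m = 2*n+1"
  define A where "A = (-1)^n * real (odd_dfact n) / \<sigma>^(2*n)"
  have key: "\<sigma> * (gc n * integral\<^sup>L M (\<lambda>\<omega>. ((g + s * X \<omega>)/\<sigma>)^m)) = A * (integral\<^sup>L M (\<lambda>\<omega>. (g + s * X \<omega>)^m) / fact m)" for s
  proof -
    have "integral\<^sup>L M (\<lambda>\<omega>. ((g + s * X \<omega>)/\<sigma>)^m) = integral\<^sup>L M (\<lambda>\<omega>. (g + s * X \<omega>)^m) / \<sigma>^m"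
      by (simp add: power_divide)
    moreover have "\<sigma>^m = \<sigma> * \<sigma>^(2*n)" unfolding m_def by simp
    moreover have gen: "\<sigma> * (c / F * (E / (\<sigma> * S))) = c / S * (E / F)" for c F E S :: real
      using \<sigma> by (cases "F = 0"; cases "S = 0") (simp_all add: field_simps)
    ultimately show ?thesis unfolding A_def gc_def m_def[symmetric]
      by (simp only: gen mult.assoc[symmetric])
  qed
  have "\<sigma> * (gc n * integral\<^sup>L M (\<lambda>\<omega>. ((g - X \<omega>)/\<sigma>)^(2*n+1)))
      = \<sigma> * (gc n * integral\<^sup>L M (\<lambda>\<omega>. ((g + (-1) * X \<omega>)/\<sigma>)^m))" unfolding m_def by simp
  also have "\<dots> = A * (\<Sum>k\<le>m. \<Sum>j\<le>k. g^(m-k) * (-1)^k * integral\<^sup>L M (\<lambda>\<omega>. (X \<omega> - \<mu>)^j) * \<mu>^(k-j) / (fact (m-k) * fact j * fact (k-j)))"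
    unfolding key moment_expand[OF iX] ..
  also have "\<dots> = (\<Sum>k\<le>2*n+1. \<Sum>j\<le>k.
            real (odd_dfact n) * g ^ (2*n+1-k) * (-1) ^ (n+k) * integral\<^sup>L M (\<lambda>\<omega>. (X \<omega> - \<mu>)^j) * \<mu> ^ (k-j)
            / (\<sigma> ^ (2*n) * fact (2*n+1-k) * fact j * fact (k-j)))"
    unfolding m_def sum_distrib_left A_def
    by (intro sum.cong refl) (simp add: power_add field_simps)
  finally show "(\<Sum>k\<le>2*n+1. \<Sum>j\<le>k.
            real (odd_dfact n) * g ^ (2*n+1-k) * (-1) ^ (n+k) * integral\<^sup>L M (\<lambda>\<omega>. (X \<omega> - \<mu>)^j) * \<mu> ^ (k-j)
            / (\<sigma> ^ (2*n) * fact (2*n+1-k) * fact j * fact (k-j)))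
      = \<sigma> * (gc n * integral\<^sup>L M (\<lambda>\<omega>. ((g - X \<omega>)/\<sigma>)^(2*n+1)))" by simp
  have "\<sigma> * (gc n * integral\<^sup>L M (\<lambda>\<omega>. ((g + X \<omega>)/\<sigma>)^(2*n+1)))
      = \<sigma> * (gc n * integral\<^sup>L M (\<lambda>\<omega>. ((g + 1 * X \<omega>)/\<sigma>)^m))" unfolding m_def by simp
  also have "\<dots> = A * (\<Sum>k\<le>m. \<Sum>j\<le>k. g^(m-k) * 1^k * integral\<^sup>L M (\<lambda>\<omega>. (X \<omega> - \<mu>)^j) * \<mu>^(k-j) / (fact (m-k) * fact j * fact (k-j)))"
    unfolding key moment_expand[OF iX] ..
  also have "\<dots> = (\<Sum>k\<le>2*n+1. \<Sum>j\<le>k.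
            real (odd_dfact n) * g ^ (2*n+1-k) * (-1) ^ n * integral\<^sup>L M (\<lambda>\<omega>. (X \<omega> - \<mu>)^j) * \<mu> ^ (k-j)
            / (\<sigma> ^ (2*n) * fact (2*n+1-k) * fact j * fact (k-j)))"
    unfolding m_def sum_distrib_left A_def
    by (intro sum.cong refl) (simp add: field_simps)
  finally show "(\<Sum>k\<le>2*n+1. \<Sum>j\<le>k.
            real (odd_dfact n) * g ^ (2*n+1-k) * (-1) ^ n * integral\<^sup>L M (\<lambda>\<omega>. (X \<omega> - \<mu>)^j) * \<mu> ^ (k-j)
            / (\<sigma> ^ (2*n) * fact (2*n+1-k) * fact j * fact (k-j)))
      = \<sigma> * (gc n * integral\<^sup>L M (\<lambda>\<omega>. ((g + X \<omega>)/\<sigma>)^(2*n+1)))" by simp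
qed


lemma pow_dom: "\<bar>y::real\<bar>^j \<le> fact j * exp 1 * exp (y^2)"
proof -
  have "\<bar>y\<bar>^j / fact j \<le> (\<Sum>n. \<bar>y\<bar>^n / fact n)"
    using sum_le_suminf[OF summable_exp_sq[of "\<bar>y\<bar>"], of "{j}"] by simp
  also have "\<dots> = exp \<bar>y\<bar>" by (rule suminf_exp_real)
  also have "\<dots> \<le> exp (1 + y^2)"
  proof -
    have "\<bar>y\<bar> \<le> 1 + y^2/2"
    proof -
      have "0 \<le> (\<bar>y\<bar> - 1)^2" by simp
      then show ?thesis by (simp add: power2_eq_square algebra_simps)
    qed
    moreover have "0 \<le> y^2" by simp
    ultimately have "\<bar>y\<bar> \<le> 1 + y^2" by linarith
    then show ?thesis by simp
  qed
  finally show ?thesis by (simp add: exp_add field_simps)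
qed

lemma sq_shift_le: "((x::real) + b)^2 \<le> 2 * x^2 + 2 * b^2"
proof -
  have "0 \<le> (x - b)^2" by simp
  then show ?thesis by (simp add: power2_eq_square algebra_simps)
qed

lemma integrable_exp_shift:
  fixes M :: "'a measure" and I :: "'a \<Rightarrow> real"
  assumes P: "prob_space M" and Im[measurable]: "I \<in> borel_measurable M"
    and iI: "\<And>l. l \<ge> 0 \<Longrightarrow> integrable M (\<lambda>\<omega>. exp (l * (I \<omega>)^2))"
    and l: "l \<ge> 0"
  shows "integrable M (\<lambda>\<omega>. exp (l * (I \<omega> + b)^2))"
proof (rule Bochner_Integration.integrable_bound)
  show "integrable M (\<lambda>\<omega>. exp (2*l*b^2) * exp ((2*l) * (I \<omega>)^2))"
    using iI[of "2*l"] l by (intro integrable_mult_right) auto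
  show "(\<lambda>\<omega>. exp (l * (I \<omega> + b)^2)) \<in> borel_measurable M" by measurable
  show "AE \<omega> in M. norm (exp (l * (I \<omega> + b)^2)) \<le> norm (exp (2*l*b^2) * exp ((2*l) * (I \<omega>)^2))"
  proof (intro AE_I2)
    fix \<omega>
    have "l * (I \<omega> + b)^2 \<le> l * (2 * (I \<omega>)^2 + 2 * b^2)"
      using sq_shift_le l by (intro mult_left_mono) auto
    then have "exp (l * (I \<omega> + b)^2) \<le> exp (2*l*b^2 + (2*l) * (I \<omega>)^2)"
      by (simp add: algebra_simps)
    then show "norm (exp (l * (I \<omega> + b)^2)) \<le> norm (exp (2*l*b^2) * exp ((2*l) * (I \<omega>)^2))"
      by (simp add: exp_add)
  qed
qed

lemma integrable_pow_shift:
  fixes M :: "'a measure" and I :: "'a \<Rightarrow> real"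
  assumes P: "prob_space M" and Im[measurable]: "I \<in> borel_measurable M"
    and iI: "\<And>l. l \<ge> 0 \<Longrightarrow> integrable M (\<lambda>\<omega>. exp (l * (I \<omega>)^2))"
  shows "integrable M (\<lambda>\<omega>. (I \<omega> + b)^j)"
proof (rule Bochner_Integration.integrable_bound)
  show "integrable M (\<lambda>\<omega>. fact j * exp 1 * exp (1 * (I \<omega> + b)^2))"
    by (intro integrable_mult_right integrable_exp_shift[OF P Im iI]) auto
  show "(\<lambda>\<omega>. (I \<omega> + b)^j) \<in> borel_measurable M" by measurable
  show "AE \<omega> in M. norm ((I \<omega> + b)^j) \<le> norm (fact j * exp 1 * exp (1 * (I \<omega> + b)^2))"
    by (intro AE_I2) (simp add: power_abs pow_dom)
qed

lemma assemble:
  fixes M :: "'a measure" and I :: "'a \<Rightarrow> real" and G \<sigma> :: real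
  assumes P: "prob_space M" and Im[measurable]: "I \<in> borel_measurable M"
    and iI: "\<And>l. l \<ge> 0 \<Longrightarrow> integrable M (\<lambda>\<omega>. exp (l * (I \<omega>)^2))"
    and \<sigma>: "\<sigma> > 0"
  shows "summable (\<lambda>n. \<Sum>k\<le>2*n+1. \<Sum>j\<le>k.
            real (odd_dfact n) * G ^ (2*n+1-k) * (-1) ^ (n+k) * integral\<^sup>L M (\<lambda>\<omega>. (I \<omega> - \<mu>)^j) * \<mu> ^ (k-j)
            / (\<sigma> ^ (2*n) * fact (2*n+1-k) * fact j * fact (k-j)))
       \<and> integral\<^sup>L M (\<lambda>\<omega>. gaussQ ((G - I \<omega>) / \<sigma>))
          = 1/2 - 1 / (sqrt (2*pi) * \<sigma>) * (\<Sum>n. \<Sum>k\<le>2*n+1. \<Sum>j\<le>k.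
            real (odd_dfact n) * G ^ (2*n+1-k) * (-1) ^ (n+k) * integral\<^sup>L M (\<lambda>\<omega>. (I \<omega> - \<mu>)^j) * \<mu> ^ (k-j)
            / (\<sigma> ^ (2*n) * fact (2*n+1-k) * fact j * fact (k-j)))
       \<and> summable (\<lambda>n. \<Sum>k\<le>2*n+1. \<Sum>j\<le>k.
            real (odd_dfact n) * G ^ (2*n+1-k) * (-1) ^ n * integral\<^sup>L M (\<lambda>\<omega>. (I \<omega> - \<mu>)^j) * \<mu> ^ (k-j)
            / (\<sigma> ^ (2*n) * fact (2*n+1-k) * fact j * fact (k-j)))
       \<and> integral\<^sup>L M (\<lambda>\<omega>. gaussQ ((G + I \<omega>) / \<sigma>))
          = 1/2 - 1 / (sqrt (2*pi) * \<sigma>) * (\<Sum>n. \<Sum>k\<le>2*n+1. \<Sum>j\<le>k.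
            real (odd_dfact n) * G ^ (2*n+1-k) * (-1) ^ n * integral\<^sup>L M (\<lambda>\<omega>. (I \<omega> - \<mu>)^j) * \<mu> ^ (k-j)
            / (\<sigma> ^ (2*n) * fact (2*n+1-k) * fact j * fact (k-j)))"
proof -
  have iX: "integrable M (\<lambda>\<omega>. (I \<omega> - \<mu>)^j)" for j
    using integrable_pow_shift[OF P Im iI, of "-\<mu>" j] by simp
  have one: "summable T \<and> integral\<^sup>L M (\<lambda>\<omega>. gaussQ (Y \<omega>)) = 1/2 - 1 / (sqrt (2*pi) * \<sigma>) * (\<Sum>n. T n)"
    if Ym[measurable]: "Y \<in> borel_measurable M" and iY: "integrable M (\<lambda>\<omega>. exp ((Y \<omega>)^2))"
      and T: "\<And>n. T n = \<sigma> * (gc n * integral\<^sup>L M (\<lambda>\<omega>. (Y \<omega>)^(2*n+1)))" for Y T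
  proof -
    note ge = gaussQ_expectation[OF P Ym iY]
    have "T sums (\<sigma> * integral\<^sup>L M (\<lambda>\<omega>. erfs (Y \<omega>)))"
      unfolding T by (rule sums_mult[OF ge(1)])
    then have "summable T" "(\<Sum>n. T n) = \<sigma> * integral\<^sup>L M (\<lambda>\<omega>. erfs (Y \<omega>))"
      by (auto simp: sums_iff)
    then show ?thesis using ge(2) \<sigma> by simp
  qed
  have nn: "(0::real) \<le> 1/\<sigma>^2" by simp
  have A: "integrable M (\<lambda>\<omega>. exp (((G - I \<omega>)/\<sigma>)^2))"
  proof -
    have "integrable M (\<lambda>\<omega>. exp ((1/\<sigma>^2) * (I \<omega> + (-G))^2))"
      using integrable_exp_shift[OF P Im iI nn] .
    moreover have "(1/\<sigma>^2) * (I \<omega> + (-G))^2 = ((G - I \<omega>)/\<sigma>)^2" for \<omega>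
      by (simp add: power_divide power2_commute)
    ultimately show ?thesis by simp
  qed
  have B: "integrable M (\<lambda>\<omega>. exp (((G + I \<omega>)/\<sigma>)^2))"
  proof -
    have "integrable M (\<lambda>\<omega>. exp ((1/\<sigma>^2) * (I \<omega> + G)^2))"
      using integrable_exp_shift[OF P Im iI nn] .
    moreover have "(1/\<sigma>^2) * (I \<omega> + G)^2 = ((G + I \<omega>)/\<sigma>)^2" for \<omega>
      by (simp add: power_divide add.commute)
    ultimately show ?thesis by simp
  qed
  show ?thesis
    using one[OF _ A term_eq(1)[OF iX \<sigma>]] one[OF _ B term_eq(2)[OF iX \<sigma>]] by simp
qed


lemma sin_int_minus:
  fixes n :: nat
  shows "sin (pi * (real n - \<tau>)) = - ((-1)^n * sin (pi*\<tau>))"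
    and "sin (pi * (- real n - \<tau>)) = - ((-1)^n * sin (pi*\<tau>))"
proof -
  have s: "sin (real n * pi) = 0" by (rule sin_npi)
  have c: "cos (real n * pi) = (-1)^n" by (rule cos_npi)
  show "sin (pi * (real n - \<tau>)) = - ((-1)^n * sin (pi*\<tau>))"
    using s c by (simp add: right_diff_distrib sin_diff mult.commute)
  show "sin (pi * (- real n - \<tau>)) = - ((-1)^n * sin (pi*\<tau>))"
    using s c by (simp add: right_diff_distrib sin_diff mult.commute)
qed

lemma not_int_shift: "0 < \<tau> \<Longrightarrow> \<tau> < 1 \<Longrightarrow> real_of_int t - \<tau> \<noteq> 0"
proof
  assume "0 < \<tau>" "\<tau> < 1" "real_of_int t - \<tau> = 0"
  then have "0 < real_of_int t" "real_of_int t < 1" by auto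
  then have "0 < t" "t < 1" by simp_all
  then show False by simp
qed

lemma nsinc_ne0:
  assumes "0 < \<tau>" "\<tau> < 1"
  shows "nsinc (real_of_int t - \<tau>) \<noteq> 0"
proof -
  have nz: "real_of_int t - \<tau> \<noteq> 0" by (rule not_int_shift[OF assms])
  have "sin (pi * (real_of_int t - \<tau>)) \<noteq> 0"
  proof
    assume "sin (pi * (real_of_int t - \<tau>)) = 0"
    then obtain k :: int where k: "pi * (real_of_int t - \<tau>) = real_of_int k * pi"
      by (auto simp: sin_zero_iff_int2)
    then have "real_of_int t - \<tau> = real_of_int k" by (simp add: mult.commute)
    then have "\<tau> = real_of_int (t - k)" by simp
    then show False using assms by (metis of_int_0_less_iff of_int_less_1_iff not_less zero_less_one_class.zero_le_one le_less_trans less_irrefl int_one_le_iff_zero_less)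
  qed
  then show ?thesis using nz by (simp add: nsinc_def)
qed

lemma nsinc_sq_le:
  assumes "0 < \<tau>" "\<tau> < 1" and t: "2 \<le> \<bar>t\<bar>"
  shows "(nsinc (real_of_int t - \<tau>))^2 \<le> 1 / (real_of_int t)^2"
proof -
  let ?x = "real_of_int t - \<tau>"
  have nz: "?x \<noteq> 0" by (rule not_int_shift[OF assms(1,2)])
  have tx: "(real_of_int t)^2 \<le> 4 * ?x^2"
  proof (cases "t \<ge> 0")
    case True
    then have "2 \<le> real_of_int t" using t by simp
    then have "real_of_int t \<le> 2 * ?x" "0 \<le> real_of_int t" using assms by auto
    then have h: "(real_of_int t)^2 \<le> (2 * ?x)^2" by (intro power_mono) auto
    have e: "(2 * y)^2 = 4 * y^2" for y :: real by (simp add: power2_eq_square)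
    from h show ?thesis unfolding e .
  next
    case False
    then have "real_of_int t \<le> -2" using t by simp
    then have "- real_of_int t \<le> - ?x" "0 \<le> - real_of_int t" using assms by auto
    then have h: "(- real_of_int t)^2 \<le> (- ?x)^2" by (intro power_mono) auto
    have "0 \<le> ?x^2" by simp
    with h show ?thesis unfolding power2_minus by linarith
  qed
  have pi4: "4 \<le> pi^2"
  proof -
    have "2 \<le> pi" using pi_gt3 by simp
    then have "2^2 \<le> pi^2" by (intro power_mono) auto
    then show ?thesis by simp
  qed
  have "(nsinc ?x)^2 = (sin (pi * ?x))^2 / (pi^2 * ?x^2)"
    using nz by (simp add: nsinc_def power_divide power_mult_distrib)
  also have "\<dots> \<le> 1 / (pi^2 * ?x^2)"
    using nz by (intro divide_right_mono) (auto simp: abs_square_le_1)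
  also have "\<dots> \<le> 1 / (real_of_int t)^2"
  proof (rule divide_left_mono)
    have "(real_of_int t)^2 \<le> 4 * ?x^2" by (rule tx)
    also have "\<dots> \<le> pi^2 * ?x^2" using pi4 by (intro mult_right_mono) auto
    finally show "(real_of_int t)^2 \<le> pi^2 * ?x^2" .
    show "0 < pi^2 * ?x^2 * (real_of_int t)^2" using nz t by auto
  qed simp
  finally show ?thesis .
qed

lemma nsinc_pair_le:
  fixes n :: nat
  assumes "0 < \<tau>" "\<tau> < 1" and n: "2 \<le> n"
  shows "\<bar>nsinc (real n - \<tau>) + nsinc (- real n - \<tau>)\<bar> \<le> 1 / (real n)^2"
proof -
  define s where "s = (-1)^n * sin (pi*\<tau>)"
  define r where "r = real n"
  have r2: "2 \<le> r" using n unfolding r_def by simp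
  have pos: "r - \<tau> > 0" "r + \<tau> > 0" using r2 assms by auto
  have nz2: "- r - \<tau> \<noteq> 0" using pos by simp
  have e1: "nsinc (r - \<tau>) = - s / (pi * (r - \<tau>))"
    using pos sin_int_minus(1)[of n \<tau>] unfolding nsinc_def s_def r_def by simp
  have e2: "nsinc (- r - \<tau>) = s / (pi * (r + \<tau>))"
  proof -
    have "nsinc (- r - \<tau>) = - s / (pi * (- r - \<tau>))"
      using nz2 sin_int_minus(2)[of n \<tau>] unfolding nsinc_def s_def r_def by simp
    also have "pi * (- r - \<tau>) = - (pi * (r + \<tau>))" by (simp add: algebra_simps)
    finally show ?thesis by simp
  qed
  have d: "1/(r + \<tau>) - 1/(r - \<tau>) = - (2*\<tau>) / (r^2 - \<tau>^2)"
    using pos by (simp add: field_simps power2_eq_square)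
  have "nsinc (r - \<tau>) + nsinc (- r - \<tau>) = s / pi * (1/(r + \<tau>) - 1/(r - \<tau>))"
    using pos pi_gt_zero unfolding e1 e2 by (simp add: divide_simps) (simp add: algebra_simps)
  also have "\<dots> = - (s / pi * ((2*\<tau>) / (r^2 - \<tau>^2)))" unfolding d by simp
  finally have hh: "nsinc (r - \<tau>) + nsinc (- r - \<tau>) = - (s / pi * ((2*\<tau>) / (r^2 - \<tau>^2)))" .
  have rt: "\<tau>^2 < r^2" using pos assms by (intro power_strict_mono) auto
  have e: "\<bar>nsinc (r - \<tau>) + nsinc (- r - \<tau>)\<bar> = \<bar>s\<bar> / pi * ((2*\<tau>) / (r^2 - \<tau>^2))"
  proof -
    have a1: "\<bar>2*\<tau>\<bar> = 2*\<tau>" using assms by simp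
    have a2: "\<bar>r^2 - \<tau>^2\<bar> = r^2 - \<tau>^2" using rt by simp
    show ?thesis unfolding hh abs_minus_cancel abs_mult abs_divide a1 a2 using assms by simp
  qed
  have t2: "\<tau>^2 < 1" using assms by (simp add: power_less_one_iff)
  have r4: "4 \<le> r^2"
  proof -
    have "2^2 \<le> r^2" using r2 by (intro power_mono) auto
    then show ?thesis by simp
  qed
  have abs_s: "\<bar>s\<bar> \<le> 1" unfolding s_def by (simp add: abs_mult)
  have "\<bar>s\<bar> / pi * ((2*\<tau>) / (r^2 - \<tau>^2)) \<le> 1 / pi * (2 / (r^2 - 1))"
  proof (rule mult_mono)
    show "\<bar>s\<bar> / pi \<le> 1 / pi" using abs_s by (simp add: divide_right_mono)
    show "(2*\<tau>) / (r^2 - \<tau>^2) \<le> 2 / (r^2 - 1)"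
      by (rule frac_le) (use assms t2 r4 in auto)
  qed (use pos assms t2 in auto)
  also have "\<dots> \<le> 1 / r^2"
  proof -
    have "2 * r^2 \<le> 3 * (r^2 - 1)" using r4 by simp
    also have "\<dots> \<le> pi * (r^2 - 1)" using pi_gt3 r4 by (intro mult_right_mono) auto
    finally have h: "2 * r^2 \<le> pi * (r^2 - 1)" .
    have "1 / pi * (2 / (r^2 - 1)) = 2 / (pi * (r^2 - 1))" by simp
    also have "\<dots> \<le> 1 / r^2" using h r4 pi_gt3 by (simp add: divide_simps)
    finally show ?thesis .
  qed
  finally show ?thesis using e unfolding r_def by simp
qed

lemma sum_inv_sq_le:
  assumes "1 \<le> N" "N \<le> M"
  shows "(\<Sum>n\<in>{N<..M}. 1 / (real n)^2) \<le> 1 / real N - 1 / real M"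
  using assms(2)
proof (induction M rule: dec_induct)
  case base then show ?case by simp
next
  case (step m)
  have m1: "1 \<le> m" using step assms by simp
  have "(\<Sum>n\<in>{N<..Suc m}. 1 / (real n)^2) = (\<Sum>n\<in>{N<..m}. 1 / (real n)^2) + 1 / (real (Suc m))^2"
  proof -
    have "{N<..Suc m} = insert (Suc m) {N<..m}" using step by auto
    then show ?thesis by simp
  qed
  also have "\<dots> \<le> 1 / real N - 1 / real m + 1 / (real (Suc m))^2" using step by simp
  also have "\<dots> \<le> 1 / real N - 1 / real (Suc m)"
  proof -
    have "1 / (real (Suc m))^2 \<le> 1 / (real m * real (Suc m))"
      by (rule divide_left_mono) (use m1 in \<open>auto simp: power2_eq_square intro!: mult_right_mono\<close>)
    also have "\<dots> = 1 / real m - 1 / real (Suc m)" using m1 by (simp add: field_simps)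
    finally have "1 / (real (Suc m))^2 \<le> 1 / real m - 1 / real (Suc m)" .
    then show ?thesis by simp
  qed
  finally show ?case .
qed


definition Dset :: "nat \<Rightarrow> nat \<Rightarrow> int set" where
  "Dset N M = {t. int N < \<bar>t\<bar> \<and> \<bar>t\<bar> \<le> int M}"

lemma finite_Dset: "finite (Dset N M)"
  by (rule finite_subset[of _ "{-int M..int M}"]) (auto simp: Dset_def)

lemma zero_notin_Dset: "0 \<notin> Dset N M"
  by (simp add: Dset_def)

lemma Dset_split:
  assumes "N \<le> M"
  shows "{-int M..int M} - {0} = ({-int N..int N} - {0}) \<union> Dset N M"
    and "({-int N..int N} - {0}) \<inter> Dset N M = {}"
  using assms by (auto simp: Dset_def)

lemma sum_Dset: "(\<Sum>t\<in>Dset N M. f t) = (\<Sum>n\<in>{N<..M}. f (int n) + f (- int n))"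
proof -
  have D: "Dset N M = int ` {N<..M} \<union> (\<lambda>n. - int n) ` {N<..M}"
  proof
    show "Dset N M \<subseteq> int ` {N<..M} \<union> (\<lambda>n. - int n) ` {N<..M}"
    proof
      fix t assume "t \<in> Dset N M"
      then have t: "int N < \<bar>t\<bar>" "\<bar>t\<bar> \<le> int M" by (auto simp: Dset_def)
      show "t \<in> int ` {N<..M} \<union> (\<lambda>n. - int n) ` {N<..M}"
      proof (cases "t \<ge> 0")
        case True
        then have "t = int (nat t)" "nat t \<in> {N<..M}" using t by auto
        then show ?thesis by blast
      next
        case False
        then have "t = - int (nat (-t))" "nat (-t) \<in> {N<..M}" using t by auto
        then show ?thesis by blast
      qed
    qed
    show "int ` {N<..M} \<union> (\<lambda>n. - int n) ` {N<..M} \<subseteq> Dset N M"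
      by (auto simp: Dset_def)
  qed
  have "(\<Sum>t\<in>Dset N M. f t) = (\<Sum>t\<in>int ` {N<..M}. f t) + (\<Sum>t\<in>(\<lambda>n. - int n) ` {N<..M}. f t)"
    unfolding D by (rule sum.union_disjoint) auto
  also have "\<dots> = (\<Sum>n\<in>{N<..M}. f (int n)) + (\<Sum>n\<in>{N<..M}. f (- int n))"
    by (subst sum.reindex, simp add: inj_on_def, subst sum.reindex, simp add: inj_on_def, simp)
  also have "\<dots> = (\<Sum>n\<in>{N<..M}. f (int n) + f (- int n))" by (simp add: sum.distrib)
  finally show ?thesis .
qed

lemma sum_sq_Dset:
  assumes "0 < \<tau>" "\<tau> < 1" "1 \<le> N" "N \<le> M"
  shows "(\<Sum>t\<in>Dset N M. (nsinc (real_of_int t - \<tau>))^2) \<le> 2 / real N"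
proof -
  have "(\<Sum>t\<in>Dset N M. (nsinc (real_of_int t - \<tau>))^2)
      = (\<Sum>n\<in>{N<..M}. (nsinc (real n - \<tau>))^2 + (nsinc (- real n - \<tau>))^2)"
    by (simp add: sum_Dset)
  also have "\<dots> \<le> (\<Sum>n\<in>{N<..M}. 2 * (1 / (real n)^2))"
  proof (rule sum_mono)
    fix n assume n: "n \<in> {N<..M}"
    then have n2: "2 \<le> \<bar>int n\<bar>" "2 \<le> \<bar>- int n\<bar>" using assms by auto
    have "(nsinc (real_of_int (int n) - \<tau>))^2 \<le> 1 / (real_of_int (int n))^2"
      by (rule nsinc_sq_le[OF assms(1,2) n2(1)])
    moreover have "(nsinc (real_of_int (- int n) - \<tau>))^2 \<le> 1 / (real_of_int (- int n))^2"
      by (rule nsinc_sq_le[OF assms(1,2) n2(2)])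
    ultimately show "(nsinc (real n - \<tau>))^2 + (nsinc (- real n - \<tau>))^2 \<le> 2 * (1 / (real n)^2)"
      by simp
  qed
  also have "\<dots> = 2 * (\<Sum>n\<in>{N<..M}. 1 / (real n)^2)" by (simp add: sum_distrib_left)
  also have "\<dots> \<le> 2 * (1 / real N - 1 / real M)"
    using sum_inv_sq_le[OF assms(3,4)] by simp
  also have "\<dots> \<le> 2 / real N" using assms by simp
  finally show ?thesis .
qed

lemma mean_Dset:
  assumes "0 < \<tau>" "\<tau> < 1" "1 \<le> N" "N \<le> M"
  shows "\<bar>\<Sum>t\<in>Dset N M. nsinc (real_of_int t - \<tau>)\<bar> \<le> 1 / real N"
proof -
  have "\<bar>\<Sum>t\<in>Dset N M. nsinc (real_of_int t - \<tau>)\<bar>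
      = \<bar>\<Sum>n\<in>{N<..M}. nsinc (real n - \<tau>) + nsinc (- real n - \<tau>)\<bar>"
    by (simp add: sum_Dset)
  also have "\<dots> \<le> (\<Sum>n\<in>{N<..M}. \<bar>nsinc (real n - \<tau>) + nsinc (- real n - \<tau>)\<bar>)"
    by (rule sum_abs)
  also have "\<dots> \<le> (\<Sum>n\<in>{N<..M}. 1 / (real n)^2)"
    by (rule sum_mono, rule nsinc_pair_le[OF assms(1,2)]) (use assms in auto)
  also have "\<dots> \<le> 1 / real N - 1 / real M" by (rule sum_inv_sq_le[OF assms(3,4)])
  also have "\<dots> \<le> 1 / real N" using assms by simp
  finally show ?thesis .
qed


definition clampY :: "int \<Rightarrow> real \<Rightarrow> real" where
  "clampY t x = (if t = 0 then 0 else max (-1) (min 1 x))"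

definition Ssum :: "(int \<Rightarrow> 'a \<Rightarrow> real) \<Rightarrow> real \<Rightarrow> nat \<Rightarrow> 'a \<Rightarrow> real" where
  "Ssum a \<tau> N \<omega> = (\<Sum>t\<in>{-int N..int N}-{0}. a t \<omega> * nsinc (real_of_int t - \<tau>))"

lemma interf_Ssum: "interf a \<tau> \<omega> = lim (\<lambda>N. Ssum a \<tau> N \<omega>)"
  unfolding interf_def Ssum_def ..

lemma clampY_meas[measurable]: "clampY t \<in> borel_measurable borel"
  unfolding clampY_def by (cases "t = 0") simp_all

lemma clampY_bound: "\<bar>clampY t x\<bar> \<le> 1"
  unfolding clampY_def by auto

lemma cauchy_blocks_claim:
  fixes f :: "nat \<Rightarrow> real"
  assumes h: "\<And>k m. k0 \<le> k \<Longrightarrow> 8^k \<le> m \<Longrightarrow> m \<le> 8^(k+1) \<Longrightarrow> \<bar>f m - f (8^k)\<bar> \<le> 2 / 2^k"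
    and K: "k0 \<le> K"
  shows "\<forall>m. 8^K \<le> m \<longrightarrow> m \<le> 8^(K+j+1) \<longrightarrow> \<bar>f m - f (8^K)\<bar> \<le> 4/2^K - 4/2^(K+j+1)"
proof (induction j)
  case 0
  have e: "4/(2::real)^K - 4/2^(K+0+1) = 2/2^K" by (simp add: field_simps)
  show ?case unfolding e using h[OF K] by simp
next
  case (Suc j)
  show ?case
  proof (intro allI impI)
    fix m :: nat assume m1: "8^K \<le> m" and m2: "m \<le> 8^(K + Suc j + 1)"
    have le: "4/2^K - 4/2^(K+j+1) \<le> 4/2^K - 4/(2::real)^(K+Suc j+1)"
      by (simp add: field_simps)
    show "\<bar>f m - f (8^K)\<bar> \<le> 4/2^K - 4/2^(K+Suc j+1)"
    proof (cases "m \<le> 8^(K+j+1)")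
      case True
      then show ?thesis using Suc.IH m1 le by fastforce
    next
      case False
      have a: "\<bar>f m - f (8^(K+j+1))\<bar> \<le> 2/2^(K+j+1)"
        using h[of "K+j+1" m] K False m2 by simp
      have p: "(8::nat)^K \<le> 8^(K+j+1)" by (intro power_increasing) auto
      have b: "\<bar>f (8^(K+j+1)) - f (8^K)\<bar> \<le> 4/2^K - 4/2^(K+j+1)"
        using Suc.IH p by simp
      have c: "2/(2::real)^(K+j+1) - 4/2^(K+j+1) = - (4/2^(K+Suc j+1))"
        by (simp add: field_simps)
      show ?thesis using a b c by linarith
    qed
  qed
qed

lemma cauchy_blocks:
  fixes f :: "nat \<Rightarrow> real"
  assumes h: "\<And>k m. k0 \<le> k \<Longrightarrow> 8^k \<le> m \<Longrightarrow> m \<le> 8^(k+1) \<Longrightarrow> \<bar>f m - f (8^k)\<bar> \<le> 2 / 2^k"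
  shows "Cauchy f"
proof -
  have bnd: "\<bar>f m - f (8^K)\<bar> \<le> 4/2^K" if K: "k0 \<le> K" and m: "8^K \<le> m" for K m
  proof -
    have "m < 2^m" by (rule less_exp)
    also have "(2::nat)^m \<le> 8^m" by (intro power_mono) auto
    also have "(8::nat)^m \<le> 8^(K+m+1)" by (intro power_increasing) auto
    finally have "m \<le> 8^(K+m+1)" by simp
    with cauchy_blocks_claim[OF h K, of m] m have "\<bar>f m - f (8^K)\<bar> \<le> 4/2^K - 4/2^(K+m+1)" by blast
    moreover have "0 \<le> 4/(2::real)^(K+m+1)" by simp
    ultimately show ?thesis by linarith
  qed
  show ?thesis
  proof (rule metric_CauchyI)
    fix e :: real assume e: "0 < e"
    obtain K1 where K1: "(1/2::real)^K1 < e/8" using real_arch_pow_inv[of "e/8" "1/2"] e by auto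
    define K where "K = max k0 K1"
    have "(1/2::real)^K \<le> (1/2)^K1" unfolding K_def by (intro power_decreasing) auto
    then have "(1/2::real)^K < e/8" using K1 by linarith
    then have Ke: "8 / (2::real)^K < e" by (simp add: power_divide field_simps)
    have k0K: "k0 \<le> K" unfolding K_def by simp
    show "\<exists>Mx. \<forall>m\<ge>Mx. \<forall>n\<ge>Mx. dist (f m) (f n) < e"
    proof (intro exI allI impI)
      fix m n :: nat assume m: "8^K \<le> m" and n: "8^K \<le> n"
      have "dist (f m) (f n) \<le> \<bar>f m - f (8^K)\<bar> + \<bar>f n - f (8^K)\<bar>"
        by (simp add: dist_real_def)
      also have "\<dots> \<le> 4/2^K + 4/2^K" using bnd[OF k0K m] bnd[OF k0K n] by (rule add_mono)
      also have "\<dots> < e" using Ke by simp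
      finally show "dist (f m) (f n) < e" .
    qed
  qed
qed

lemma exp_lower5: "(x/5)^5 \<le> exp (x::real)" if "0 \<le> x"
proof -
  have "1 + x/5 \<le> exp (x/5)" by (rule exp_ge_add_one_self)
  then have "x/5 \<le> exp (x/5)" by linarith
  then have "(x/5)^5 \<le> (exp (x/5))^5" by (intro power_mono) (use that in auto)
  also have "\<dots> = exp x" by (simp add: exp_of_nat_mult[symmetric])
  finally show ?thesis .
qed

lemma exp_neg_pow2_le: "exp (- ((2::real)^k / 4)) \<le> 20^5 / 32^k"
proof -
  define y :: real where "y = 2^k / 4"
  have y0: "0 \<le> y" unfolding y_def by simp
  have q: "(y/5)^5 = 32^k / 20^5"
  proof -
    have "(y/5)^5 = ((2::real)^k)^5 / 20^5" unfolding y_def by (simp add: power_divide)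
    also have "((2::real)^k)^5 = 32^k"
    proof -
      have "((2::real)^k)^5 = 2^(k*5)" by (rule power_mult[symmetric])
      also have "\<dots> = (2^5)^k" by (simp only: mult.commute[of k 5] power_mult)
      finally show ?thesis by simp
    qed
    finally show ?thesis .
  qed
  have qpos: "0 < (32::real)^k / 20^5" by simp
  have "exp (- y) = 1 / exp y" by (simp add: exp_minus inverse_eq_divide)
  also have "\<dots> \<le> 1 / (32^k / 20^5)"
    using exp_lower5[OF y0] unfolding q by (intro divide_left_mono) (use qpos in auto)
  also have "\<dots> = 20^5 / 32^k" by simp
  finally show ?thesis unfolding y_def .
qed

lemma bc_term_summable: "summable (\<lambda>k::nat. real (8^(k+1)) * (2 * exp (- ((1/2^k)^2 * real (8^k) / 4))))"
proof (rule summable_comparison_test[OF _ summable_mult[OF summable_geometric[of "1/4::real"], of "16 * 20^5"]])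
  show "\<exists>N. \<forall>n\<ge>N. norm (real (8^(n+1)) * (2 * exp (- ((1/2^n)^2 * real (8^n) / 4)))) \<le> 16 * 20^5 * (1/4)^n"
  proof (intro exI allI impI)
    fix k :: nat
    have s4: "((2::real)^k)^2 = 4^k" by (simp add: power2_eq_square power_mult_distrib[symmetric])
    have s8: "(8::real)^k = 2^k * 4^k" by (simp add: power_mult_distrib[symmetric])
    have e1: "(1/2^k)^2 * real (8^k) / 4 = (2::real)^k / 4"
      by (simp add: power_divide s4 s8)
    have "real (8^(k+1)) * (2 * exp (- ((1/2^k)^2 * real (8^k) / 4))) = 16 * 8^k * exp (- ((2::real)^k / 4))"
      unfolding e1 by simp
    also have "\<dots> \<le> 16 * 8^k * (20^5 / 32^k)" by (intro mult_left_mono exp_neg_pow2_le) auto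
    also have "\<dots> = 16 * 20^5 * (1/4)^k"
    proof -
      have "(32::real)^k = 8^k * 4^k" by (simp add: power_mult_distrib[symmetric])
      then show ?thesis by (simp add: power_divide)
    qed
    finally show "norm (real (8^(k+1)) * (2 * exp (- ((1/2^k)^2 * real (8^k) / 4)))) \<le> 16 * 20^5 * (1/4)^k"
      by simp
  qed
qed simp

context
  fixes M :: "'a measure" and a :: "int \<Rightarrow> 'a \<Rightarrow> real" and p \<tau> :: real
  assumes P: "prob_space M"
    and p0: "0 \<le> p" and p1: "p \<le> 1" and \<tau>0: "0 < \<tau>" and \<tau>1: "\<tau> < 1"
    and ind: "prob_space.indep_vars M (\<lambda>_. borel) a (UNIV - {0})"
    and pp: "\<And>t. t \<noteq> 0 \<Longrightarrow> measure M {\<omega>\<in>space M. a t \<omega> = 1} = p"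
    and pm: "\<And>t. t \<noteq> 0 \<Longrightarrow> measure M {\<omega>\<in>space M. a t \<omega> = -1} = 1 - p"
begin

interpretation PS: prob_space M by (rule P)

lemma a_meas: "t \<noteq> 0 \<Longrightarrow> a t \<in> borel_measurable M"
  using ind unfolding PS.indep_vars_def by auto

definition a' :: "int \<Rightarrow> 'a \<Rightarrow> real" where
  "a' t \<omega> = clampY t (a t \<omega>)"

lemma a'_meas[measurable]: "a' t \<in> borel_measurable M"
proof (cases "t = 0")
  case True then show ?thesis unfolding a'_def clampY_def by simp
next
  case False
  note [measurable] = a_meas[OF False]
  show ?thesis unfolding a'_def by measurable
qed

lemma a'_bound: "\<bar>a' t \<omega>\<bar> \<le> 1"
  unfolding a'_def by (rule clampY_bound)

lemma ind': "PS.indep_vars (\<lambda>_. borel) a' (UNIV - {0})"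
  unfolding a'_def by (rule PS.indep_vars_compose2[OF ind]) simp

lemma AE_a: assumes "t \<noteq> 0" shows "AE \<omega> in M. a t \<omega> = 1 \<or> a t \<omega> = -1"
proof -
  note [measurable] = a_meas[OF assms]
  let ?A = "{\<omega>\<in>space M. a t \<omega> = 1}" and ?B = "{\<omega>\<in>space M. a t \<omega> = -1}"
  have "PS.prob (?A \<union> ?B) = PS.prob ?A + PS.prob ?B"
    by (rule PS.finite_measure_Union) auto
  also have "\<dots> = 1" using pp[OF assms] pm[OF assms] by simp
  finally have "AE \<omega> in M. \<omega> \<in> ?A \<union> ?B" by (rule PS.AE_prob_1)
  then show ?thesis by eventually_elim auto
qed

lemma AE_a': "AE \<omega> in M. \<forall>t. t \<noteq> 0 \<longrightarrow> a' t \<omega> = a t \<omega>"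
proof -
  have "AE \<omega> in M. t \<noteq> 0 \<longrightarrow> a' t \<omega> = a t \<omega>" for t
  proof (cases "t = 0")
    case False
    show ?thesis using AE_a[OF False] by eventually_elim (auto simp: a'_def clampY_def False)
  qed simp
  then show ?thesis by (simp add: AE_all_countable)
qed

lemma E_a': assumes "t \<noteq> 0" shows "PS.expectation (a' t) = 2*p - 1"
proof -
  note [measurable] = a_meas[OF assms]
  let ?A = "{\<omega>\<in>space M. a t \<omega> = 1}" and ?B = "{\<omega>\<in>space M. a t \<omega> = -1}"
  have "PS.expectation (a' t) = PS.expectation (\<lambda>\<omega>. indicator ?A \<omega> - indicator ?B \<omega>)"
  proof (rule integral_cong_AE)
    show "AE \<omega> in M. a' t \<omega> = indicator ?A \<omega> - indicator ?B \<omega>"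
      using AE_a[OF assms] AE_space
      by eventually_elim (auto simp: a'_def clampY_def assms indicator_def)
  qed auto
  also have "\<dots> = PS.prob ?A - PS.prob ?B"
    by (subst Bochner_Integration.integral_diff) (auto simp: Int_absorb2 PS.emeasure_eq_measure)
  also have "\<dots> = 2*p - 1" using pp[OF assms] pm[OF assms] by simp
  finally show ?thesis .
qed


abbreviation "cc t \<equiv> nsinc (real_of_int t - \<tau>)"

definition mD :: "nat \<Rightarrow> nat \<Rightarrow> real" where
  "mD N K = (2*p - 1) * (\<Sum>t\<in>Dset N K. cc t)"

lemma mD_bound: "1 \<le> N \<Longrightarrow> N \<le> K \<Longrightarrow> \<bar>mD N K\<bar> \<le> 1 / real N"
proof -
  assume a: "1 \<le> N" "N \<le> K"
  have "\<bar>mD N K\<bar> = \<bar>2*p - 1\<bar> * \<bar>\<Sum>t\<in>Dset N K. cc t\<bar>" by (simp add: mD_def abs_mult)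
  also have "\<dots> \<le> 1 * (1 / real N)"
    by (intro mult_mono mean_Dset[OF \<tau>0 \<tau>1 a]) (use p0 p1 in auto)
  finally show ?thesis by simp
qed

lemma Ssum_diff: "N \<le> K \<Longrightarrow> Ssum a' \<tau> K \<omega> - Ssum a' \<tau> N \<omega> = (\<Sum>t\<in>Dset N K. a' t \<omega> * cc t)"
proof -
  assume NM: "N \<le> K"
  have "Ssum a' \<tau> K \<omega> = Ssum a' \<tau> N \<omega> + (\<Sum>t\<in>Dset N K. a' t \<omega> * cc t)"
    unfolding Ssum_def Dset_split(1)[OF NM]
    by (rule sum.union_disjoint) (use Dset_split(2)[OF NM] finite_Dset in auto)
  then show ?thesis by simp
qed

lemma Ssum_meas[measurable]: "Ssum a' \<tau> N \<in> borel_measurable M"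
  unfolding Ssum_def by measurable

lemma Ssum_bound: "\<bar>Ssum a' \<tau> N \<omega>\<bar> \<le> (\<Sum>t\<in>{-int N..int N}-{0}. \<bar>cc t\<bar>)"
proof -
  have "\<bar>Ssum a' \<tau> N \<omega>\<bar> \<le> (\<Sum>t\<in>{-int N..int N}-{0}. \<bar>a' t \<omega> * cc t\<bar>)"
    unfolding Ssum_def by (rule sum_abs)
  also have "\<dots> \<le> (\<Sum>t\<in>{-int N..int N}-{0}. \<bar>cc t\<bar>)"
  proof (rule sum_mono)
    fix t
    have "\<bar>a' t \<omega>\<bar> * \<bar>cc t\<bar> \<le> 1 * \<bar>cc t\<bar>" by (intro mult_right_mono a'_bound) auto
    then show "\<bar>a' t \<omega> * cc t\<bar> \<le> \<bar>cc t\<bar>" by (simp add: abs_mult)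
  qed
  finally show ?thesis .
qed

lemma tail_bound:
  assumes N1: "1 \<le> N" and NM: "N \<le> K" and e: "0 \<le> \<epsilon>"
  shows "PS.prob {\<omega>\<in>space M. \<epsilon> \<le> \<bar>Ssum a' \<tau> K \<omega> - Ssum a' \<tau> N \<omega> - mD N K\<bar>} \<le> 2 * exp (- (\<epsilon>^2 * real N / 4))"
proof (cases "N = K")
  case True
  have "Dset N K = {}" unfolding True Dset_def by auto
  then have z: "mD N K = 0" unfolding mD_def by simp
  show ?thesis
  proof (cases "\<epsilon> = 0")
    case True
    have "PS.prob {\<omega>\<in>space M. \<epsilon> \<le> \<bar>Ssum a' \<tau> K \<omega> - Ssum a' \<tau> N \<omega> - mD N K\<bar>} \<le> 1" by (rule PS.prob_le_1)
    moreover have "2 * exp (- (\<epsilon>^2 * real N / 4)) = 2" using True by simp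
    ultimately show ?thesis by linarith
  next
    case False
    then have emp: "{\<omega>\<in>space M. \<epsilon> \<le> \<bar>Ssum a' \<tau> K \<omega> - Ssum a' \<tau> N \<omega> - mD N K\<bar>} = {}"
      using e z \<open>N = K\<close> by auto
    show ?thesis unfolding emp by simp
  qed
next
  case False
  with NM have NM': "N < K" by simp
  define D where "D = Dset N K"
  define X where "X t \<omega> = a' t \<omega> * cc t" for t \<omega>
  define lo where "lo t = - \<bar>cc t\<bar>" for t
  define hi where "hi t = \<bar>cc t\<bar>" for t
  have D0: "D \<subseteq> UNIV - {0}" using zero_notin_Dset unfolding D_def by auto
  have ED: "(\<Sum>i\<in>D. PS.expectation (X i)) = mD N K"
  proof -
    have "PS.expectation (X i) = (2*p - 1) * cc i" if "i \<in> D" for i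
    proof -
      have "i \<noteq> 0" using that D0 by auto
      then show ?thesis unfolding X_def using E_a' by simp
    qed
    then show ?thesis unfolding mD_def D_def by (simp add: sum_distrib_left)
  qed
  interpret H: Hoeffding_ineq M D X lo hi "mD N K"
  proof unfold_locales
    show "finite D" unfolding D_def by (rule finite_Dset)
    show "PS.indep_vars (\<lambda>_. borel) X D"
      unfolding X_def
      by (rule PS.indep_vars_compose2[OF PS.indep_vars_subset[OF ind' D0]]) simp
    show "AE x in M. X i x \<in> {lo i..hi i}" for i
    proof (intro AE_I2)
      fix x
      have "\<bar>a' i x\<bar> * \<bar>cc i\<bar> \<le> 1 * \<bar>cc i\<bar>" by (intro mult_right_mono a'_bound) auto
      then have "\<bar>X i x\<bar> \<le> \<bar>cc i\<bar>" unfolding X_def by (simp add: abs_mult)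
      then show "X i x \<in> {lo i..hi i}" unfolding lo_def hi_def by auto
    qed
    show "mD N K \<equiv> \<Sum>i\<in>D. PS.expectation (X i)" using ED by simp
  qed
  have dsum: "(\<Sum>i\<in>D. (hi i - lo i)^2) = 4 * (\<Sum>i\<in>D. (cc i)^2)"
    unfolding hi_def lo_def by (simp add: sum_distrib_left power2_eq_square)
  have dle: "(\<Sum>i\<in>D. (hi i - lo i)^2) \<le> 8 / real N"
    using sum_sq_Dset[OF \<tau>0 \<tau>1 N1 NM] unfolding dsum unfolding D_def by simp
  have dpos: "(\<Sum>i\<in>D. (hi i - lo i)^2) > 0"
  proof -
    have mem: "int (Suc N) \<in> D" using NM' unfolding D_def Dset_def by auto
    have "0 < (cc (int (Suc N)))^2" using nsinc_ne0[OF \<tau>0 \<tau>1, of "int (Suc N)"] by simp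
    also have "\<dots> \<le> (\<Sum>i\<in>D. (cc i)^2)"
      by (rule member_le_sum[OF mem]) (auto simp: D_def finite_Dset)
    finally show ?thesis unfolding dsum by simp
  qed
  have "PS.prob {\<omega>\<in>space M. \<epsilon> \<le> \<bar>Ssum a' \<tau> K \<omega> - Ssum a' \<tau> N \<omega> - mD N K\<bar>}
      = PS.prob {x\<in>space M. \<bar>(\<Sum>i\<in>D. X i x) - mD N K\<bar> \<ge> \<epsilon>}"
    unfolding Ssum_diff[OF NM] D_def X_def by simp
  also have "\<dots> \<le> 2 * exp (-2 * \<epsilon>^2 / (\<Sum>i\<in>D. (hi i - lo i)^2))"
    by (rule H.Hoeffding_ineq_abs_ge[OF e dpos])
  also have "\<dots> \<le> 2 * exp (- (\<epsilon>^2 * real N / 4))"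
  proof -
    have "\<epsilon>^2 * real N / 4 = 2 * \<epsilon>^2 / (8 / real N)" using N1 by (simp add: field_simps)
    also have "\<dots> \<le> 2 * \<epsilon>^2 / (\<Sum>i\<in>D. (hi i - lo i)^2)"
      by (rule divide_left_mono[OF dle]) (use dpos N1 in auto)
    finally show ?thesis by simp
  qed
  finally show ?thesis .
qed


lemma AE_conv: "AE \<omega> in M. (\<lambda>N. Ssum a' \<tau> N \<omega>) \<longlonglongrightarrow> interf a' \<tau> \<omega>"
proof -
  define B where "B k m = {\<omega>\<in>space M. 1/2^k \<le> \<bar>Ssum a' \<tau> m \<omega> - Ssum a' \<tau> (8^k) \<omega> - mD (8^k) m\<bar>}" for k m :: nat
  define A where "A k = (\<Union>m\<in>{(8::nat)^k..8^(k+1)}. B k m)" for k :: nat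
  have Bm: "B k m \<in> sets M" for k m unfolding B_def by measurable
  have Am: "A k \<in> sets M" for k unfolding A_def using Bm by (intro sets.finite_UN) auto
  have Ab: "PS.prob (A k) \<le> real (8^(k+1)) * (2 * exp (- ((1/2^k)^2 * real (8^k) / 4)))" for k
  proof -
    have "PS.prob (A k) \<le> (\<Sum>m\<in>{(8::nat)^k..8^(k+1)}. PS.prob (B k m))"
      unfolding A_def by (rule PS.finite_measure_subadditive_finite) (use Bm in auto)
    also have "\<dots> \<le> (\<Sum>m\<in>{(8::nat)^k..8^(k+1)}. 2 * exp (- ((1/2^k)^2 * real (8^k) / 4)))"
    proof (rule sum_mono)
      fix m assume m: "m \<in> {(8::nat)^k..8^(k+1)}"
      have "1 \<le> (8::nat)^k" by simp
      then show "PS.prob (B k m) \<le> 2 * exp (- ((1/2^k)^2 * real (8^k) / 4))"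
        unfolding B_def using tail_bound[of "8^k" m "1/2^k"] m by simp
    qed
    also have "\<dots> = real (card {(8::nat)^k..8^(k+1)}) * (2 * exp (- ((1/2^k)^2 * real (8^k) / 4)))" by simp
    also have "\<dots> \<le> real (8^(k+1)) * (2 * exp (- ((1/2^k)^2 * real (8^k) / 4)))"
    proof (intro mult_right_mono)
      have "card {(8::nat)^k..8^(k+1)} = 8^(k+1) + 1 - 8^k" by simp
      also have "\<dots> \<le> 8^(k+1)" by (simp add: Suc_leI)
      finally show "real (card {(8::nat)^k..8^(k+1)}) \<le> real (8^(k+1))" by linarith
    qed auto
    finally show ?thesis .
  qed
  have sA: "summable (\<lambda>k. PS.prob (A k))"
    by (rule summable_comparison_test[OF _ bc_term_summable]) (use Ab in auto)
  have evA: "AE \<omega> in M. eventually (\<lambda>k. \<omega> \<in> space M - A k) sequentially"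
    by (rule borel_cantelli_AE1[OF Am]) (auto simp: sA PS.emeasure_eq_measure)
  show ?thesis using evA AE_space
  proof eventually_elim
    case (elim \<omega>)
    then have sp: "\<omega> \<in> space M" and ev: "eventually (\<lambda>k. \<omega> \<in> space M - A k) sequentially" by auto
    from ev obtain k0 where k0: "\<And>k. k \<ge> k0 \<Longrightarrow> \<omega> \<notin> A k" by (auto simp: eventually_sequentially)
    have "Cauchy (\<lambda>N. Ssum a' \<tau> N \<omega>)"
    proof (rule cauchy_blocks[of k0])
      fix k m :: nat assume k: "k0 \<le> k" and m1: "8^k \<le> m" and m2: "m \<le> 8^(k+1)"
      have "\<omega> \<notin> B k m" using k0[OF k] m1 m2 unfolding A_def by auto
      then have lt: "\<bar>Ssum a' \<tau> m \<omega> - Ssum a' \<tau> (8^k) \<omega> - mD (8^k) m\<bar> < 1/2^k"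
        using sp unfolding B_def by auto
      have "\<bar>mD (8^k) m\<bar> \<le> 1 / real (8^k)" by (rule mD_bound) (use m1 in auto)
      also have "\<dots> \<le> 1 / 2^k" by (intro divide_left_mono) (auto intro: power_mono)
      finally have "\<bar>mD (8^k) m\<bar> \<le> 1 / 2^k" .
      with lt show "\<bar>Ssum a' \<tau> m \<omega> - Ssum a' \<tau> (8^k) \<omega>\<bar> \<le> 2 / 2^k" by linarith
    qed
    then have "convergent (\<lambda>N. Ssum a' \<tau> N \<omega>)" by (simp add: Cauchy_convergent_iff)
    then show "(\<lambda>N. Ssum a' \<tau> N \<omega>) \<longlonglongrightarrow> interf a' \<tau> \<omega>"
      unfolding interf_Ssum by (simp add: convergent_LIMSEQ_iff)
  qed
qed


lemma interf'_meas[measurable]: "interf a' \<tau> \<in> borel_measurable M"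
proof -
  have "(\<lambda>\<omega>. lim (\<lambda>N. Ssum a' \<tau> N \<omega>)) \<in> borel_measurable M"
    by (rule borel_measurable_lim_metric) simp
  then show ?thesis by (simp add: interf_Ssum[abs_def])
qed

lemma exponent_bound:
  fixes l r :: real and k :: nat
  assumes l: "0 \<le> l" and r: "16 * l + 4 \<le> r"
  shows "2*l*(real k+1)^2 - (real k)^2 * r / 4 \<le> 4*l - real k"
proof -
  have r4: "4*l + 1 \<le> r / 4" using r by simp
  have "(real k)^2 * (4*l + 1) \<le> (real k)^2 * (r / 4)" using r4 by (intro mult_left_mono) auto
  then have "(real k)^2 * (4*l + 1) \<le> (real k)^2 * r / 4" by simp
  moreover have "2*l*(real k+1)^2 - (real k)^2 * (4*l + 1) = 2*l*(2*real k + 1 - (real k)^2) - (real k)^2"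
    by (simp add: power2_eq_square algebra_simps)
  moreover have "2*l*(2*real k + 1 - (real k)^2) \<le> 2*l*2"
  proof (intro mult_left_mono)
    have "0 \<le> (real k - 1)^2" by simp
    then show "2*real k + 1 - (real k)^2 \<le> 2" by (simp add: power2_eq_square algebra_simps)
  qed (use l in auto)
  moreover have "real k \<le> (real k)^2"
  proof (cases "k = 0")
    case False then have "1 \<le> real k" by simp
    then have "real k * 1 \<le> real k * real k" by (intro mult_left_mono) auto
    then show ?thesis by (simp add: power2_eq_square)
  qed simp
  ultimately show ?thesis by linarith
qed

lemma finite_bound_exp:
  assumes l: "0 \<le> l" and N1: "1 \<le> N" and Nl: "16 * l + 4 \<le> real N" and NK: "N \<le> K"
  defines "B \<equiv> (\<Sum>t\<in>{-int N..int N}-{0}. \<bar>cc t\<bar>) + 1"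
  shows "(\<integral>\<^sup>+\<omega>. ennreal (exp (l * (Ssum a' \<tau> K \<omega>)^2)) \<partial>M)
     \<le> ennreal (\<Sum>k. exp (2*l*B^2) * (2 * exp (4*l)) * exp (-1) ^ k)"
proof -
  define X where "X \<omega> = Ssum a' \<tau> K \<omega> - Ssum a' \<tau> N \<omega> - mD N K" for \<omega>
  define E where "E k = {\<omega>\<in>space M. real k \<le> \<bar>X \<omega>\<bar>}" for k :: nat
  define c where "c k = exp (2*l*B^2) * exp (2*l*(real k+1)^2)" for k :: nat
  have Em: "E k \<in> sets M" for k unfolding E_def X_def by measurable
  have pt: "ennreal (exp (l * (Ssum a' \<tau> K \<omega>)^2)) \<le> (\<Sum>k. ennreal (c k) * indicator (E k) \<omega>)"
    if \<omega>: "\<omega> \<in> space M" for \<omega>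
  proof -
    define u where "u = Ssum a' \<tau> N \<omega> + mD N K"
    have uB: "\<bar>u\<bar> \<le> B"
    proof -
      have "\<bar>u\<bar> \<le> \<bar>Ssum a' \<tau> N \<omega>\<bar> + \<bar>mD N K\<bar>" unfolding u_def by (rule abs_triangle_ineq)
      also have "\<dots> \<le> (\<Sum>t\<in>{-int N..int N}-{0}. \<bar>cc t\<bar>) + 1"
      proof (rule add_mono[OF Ssum_bound])
        have "\<bar>mD N K\<bar> \<le> 1 / real N" by (rule mD_bound[OF N1 NK])
        also have "\<dots> \<le> 1" using N1 by simp
        finally show "\<bar>mD N K\<bar> \<le> 1" .
      qed
      finally show ?thesis unfolding B_def .
    qed
    have SX: "Ssum a' \<tau> K \<omega> = u + X \<omega>" unfolding u_def X_def by simp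
    define k0 where "k0 = nat \<lfloor>\<bar>X \<omega>\<bar>\<rfloor>"
    have k0a: "real k0 \<le> \<bar>X \<omega>\<bar>" unfolding k0_def by linarith
    have k0b: "\<bar>X \<omega>\<bar> \<le> real k0 + 1" unfolding k0_def by linarith
    have "(Ssum a' \<tau> K \<omega>)^2 \<le> 2 * u^2 + 2 * (X \<omega>)^2"
      unfolding SX using sq_shift_le[of u "X \<omega>"] by (simp add: add.commute)
    also have "\<dots> \<le> 2 * B^2 + 2 * (real k0 + 1)^2"
    proof -
      have "u^2 \<le> B^2" using uB by (simp add: abs_le_square_iff[symmetric] abs_of_nonneg order_trans[OF abs_ge_zero uB])
      moreover have "(X \<omega>)^2 \<le> (real k0 + 1)^2" using k0b by (simp add: abs_le_square_iff[symmetric])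
      ultimately show ?thesis by simp
    qed
    finally have "l * (Ssum a' \<tau> K \<omega>)^2 \<le> l * (2 * B^2 + 2 * (real k0 + 1)^2)"
      by (intro mult_left_mono l)
    then have "exp (l * (Ssum a' \<tau> K \<omega>)^2) \<le> c k0"
      unfolding c_def by (simp add: exp_add[symmetric] algebra_simps)
    then have h1: "ennreal (exp (l * (Ssum a' \<tau> K \<omega>)^2)) \<le> ennreal (c k0)" by (rule ennreal_leI)
    have mem: "\<omega> \<in> E k0" using k0a \<omega> unfolding E_def by simp
    have h2: "ennreal (c k0) = ennreal (c k0) * indicator (E k0) \<omega>" using mem by simp
    have h3g: "F k0 \<le> suminf F" for F :: "nat \<Rightarrow> ennreal"
      using sum_le_suminf[of F "{k0}"] by (simp add: summableI)
    have h3: "ennreal (c k0) * indicator (E k0) \<omega> \<le> (\<Sum>k. ennreal (c k) * indicator (E k) \<omega>)"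
      by (rule h3g[of "\<lambda>k. ennreal (c k) * indicator (E k) \<omega>"])
    have "ennreal (exp (l * (Ssum a' \<tau> K \<omega>)^2)) \<le> ennreal (c k0) * indicator (E k0) \<omega>"
      using h1 h2 by simp
    also have "\<dots> \<le> (\<Sum>k. ennreal (c k) * indicator (E k) \<omega>)" by (rule h3)
    finally show ?thesis .
  qed
  have "(\<integral>\<^sup>+\<omega>. ennreal (exp (l * (Ssum a' \<tau> K \<omega>)^2)) \<partial>M) \<le> (\<integral>\<^sup>+\<omega>. (\<Sum>k. ennreal (c k) * indicator (E k) \<omega>) \<partial>M)"
    by (rule nn_integral_mono) (use pt in auto)
  also have "\<dots> = (\<Sum>k. \<integral>\<^sup>+\<omega>. ennreal (c k) * indicator (E k) \<omega> \<partial>M)"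
    by (rule nn_integral_suminf) (use Em in measurable)
  also have "\<dots> = (\<Sum>k. ennreal (c k) * emeasure M (E k))"
    by (simp add: nn_integral_cmult_indicator Em)
  also have "\<dots> \<le> (\<Sum>k. ennreal (exp (2*l*B^2) * (2 * exp (4*l)) * exp (-1) ^ k))"
  proof (rule suminf_le)
    fix k
    have "PS.prob (E k) \<le> 2 * exp (- ((real k)^2 * real N / 4))"
      unfolding E_def X_def by (rule tail_bound[OF N1 NK]) simp
    then have "ennreal (c k) * emeasure M (E k) \<le> ennreal (c k) * ennreal (2 * exp (- ((real k)^2 * real N / 4)))"
      by (intro mult_left_mono) (auto simp: PS.emeasure_eq_measure)
    also have "\<dots> = ennreal (c k * (2 * exp (- ((real k)^2 * real N / 4))))"
      unfolding c_def by (simp add: ennreal_mult'[symmetric])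
    also have "c k * (2 * exp (- ((real k)^2 * real N / 4))) \<le> exp (2*l*B^2) * (2 * exp (4*l)) * exp (-1) ^ k"
    proof -
      have "2*l*(real k+1)^2 - (real k)^2 * real N / 4 \<le> 4*l - real k" by (rule exponent_bound[OF l Nl])
      then have "exp (2*l*(real k+1)^2 + - ((real k)^2 * real N / 4)) \<le> exp (4*l + - real k)" by simp
      then have "exp (2*l*(real k+1)^2) * exp (- ((real k)^2 * real N / 4)) \<le> exp (4*l) * exp (-1) ^ k"
        by (simp add: exp_add[symmetric] exp_of_nat_mult[symmetric])
      then show ?thesis unfolding c_def by (simp add: algebra_simps mult_left_mono)
    qed
    finally show "ennreal (c k) * emeasure M (E k) \<le> ennreal (exp (2*l*B^2) * (2 * exp (4*l)) * exp (-1) ^ k)"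
      by (simp add: ennreal_leI)
  qed (auto intro: summableI)
  also have "\<dots> = ennreal (\<Sum>k. exp (2*l*B^2) * (2 * exp (4*l)) * exp (-1) ^ k)"
    by (rule suminf_ennreal2) (auto intro!: summable_mult summable_geometric)
  finally show ?thesis .
qed


lemma exp_moment':
  assumes l: "0 \<le> l"
  shows "integrable M (\<lambda>\<omega>. exp (l * (interf a' \<tau> \<omega>)^2))"
proof -
  define N where "N = nat \<lceil>16*l\<rceil> + 4"
  have N1: "1 \<le> N" unfolding N_def by simp
  have Nl: "16 * l + 4 \<le> real N" unfolding N_def using l by linarith
  define B where "B = (\<Sum>t\<in>{-int N..int N}-{0}. \<bar>cc t\<bar>) + 1"
  define C where "C = (\<Sum>k. exp (2*l*B^2) * (2 * exp (4*l)) * exp (-1) ^ k)"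
  let ?u = "\<lambda>K \<omega>. ennreal (exp (l * (Ssum a' \<tau> K \<omega>)^2))"
  have fb: "(\<integral>\<^sup>+\<omega>. ?u K \<omega> \<partial>M) \<le> ennreal C" if "N \<le> K" for K
    unfolding C_def B_def by (rule finite_bound_exp[OF l N1 Nl that])
  have lim: "AE \<omega> in M. (\<lambda>K. ?u K \<omega>) \<longlonglongrightarrow> ennreal (exp (l * (interf a' \<tau> \<omega>)^2))"
    using AE_conv by eventually_elim (intro tendsto_intros)
  have "(\<integral>\<^sup>+\<omega>. ennreal (exp (l * (interf a' \<tau> \<omega>)^2)) \<partial>M) = (\<integral>\<^sup>+\<omega>. liminf (\<lambda>K. ?u K \<omega>) \<partial>M)"
  proof (rule nn_integral_cong_AE)
    show "AE \<omega> in M. ennreal (exp (l * (interf a' \<tau> \<omega>)^2)) = liminf (\<lambda>K. ?u K \<omega>)"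
      using lim
    proof eventually_elim
      case (elim \<omega>)
      show ?case by (rule lim_imp_Liminf[symmetric, OF trivial_limit_sequentially elim])
    qed
  qed
  also have "\<dots> \<le> liminf (\<lambda>K. \<integral>\<^sup>+\<omega>. ?u K \<omega> \<partial>M)"
    by (rule nn_integral_liminf) measurable
  also have "\<dots> \<le> ennreal C"
    by (rule Liminf_le) (auto simp: eventually_sequentially intro!: exI[of _ N] fb)
  finally have fin: "(\<integral>\<^sup>+\<omega>. ennreal (norm (exp (l * (interf a' \<tau> \<omega>)^2))) \<partial>M) < \<infinity>"
    by (simp add: le_less_trans)
  show ?thesis by (rule integrableI_bounded[OF _ fin]) measurable
qed

lemma Ssum_meas_a[measurable]: "Ssum a \<tau> N \<in> borel_measurable M"
  unfolding Ssum_def by (rule borel_measurable_sum) (use a_meas in auto)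

lemma interf_meas[measurable]: "interf a \<tau> \<in> borel_measurable M"
proof -
  have "(\<lambda>\<omega>. lim (\<lambda>N. Ssum a \<tau> N \<omega>)) \<in> borel_measurable M"
    by (rule borel_measurable_lim_metric) simp
  then show ?thesis by (simp add: interf_Ssum[abs_def])
qed

lemma AE_interf: "AE \<omega> in M. interf a \<tau> \<omega> = interf a' \<tau> \<omega>"
  using AE_a'
proof eventually_elim
  case (elim \<omega>)
  have "Ssum a \<tau> N \<omega> = Ssum a' \<tau> N \<omega>" for N
    unfolding Ssum_def by (rule sum.cong) (use elim in auto)
  then show ?case unfolding interf_Ssum by simp
qed

lemma exp_moment:
  assumes l: "0 \<le> l"
  shows "integrable M (\<lambda>\<omega>. exp (l * (interf a \<tau> \<omega>)^2))"
proof -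
  have "integrable M (\<lambda>\<omega>. exp (l * (interf a' \<tau> \<omega>)^2)) = integrable M (\<lambda>\<omega>. exp (l * (interf a \<tau> \<omega>)^2))"
    by (rule integrable_cong_AE) (use AE_interf in \<open>measurable, eventually_elim, simp\<close>)
  then show ?thesis using exp_moment'[OF l] by simp
qed

end


theorem lemma2:
  fixes M :: "'a measure" and a :: "int \<Rightarrow> 'a \<Rightarrow> real"
    and p \<tau> \<sigma> :: real
  assumes "prob_space M"
    and "0 \<le> p" "p \<le> 1" "0 < \<tau>" "\<tau> < 1" "0 < \<sigma>"
    and "prob_space.indep_vars M (\<lambda>_. borel) a (UNIV - {0})"
    and "\<And>t. t \<noteq> 0 \<Longrightarrow> measure M {\<omega>\<in>space M. a t \<omega> = 1} = p"
    and "\<And>t. t \<noteq> 0 \<Longrightarrow> measure M {\<omega>\<in>space M. a t \<omega> = -1} = 1 - p"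
  defines "I \<equiv> interf a \<tau>"
  defines "\<mu> \<equiv> integral\<^sup>L M I"
  defines "\<mu>j \<equiv> (\<lambda>j::nat. integral\<^sup>L M (\<lambda>\<omega>. (I \<omega> - \<mu>) ^ j))"
  defines "g \<equiv> nsinc"
  shows "summable (\<lambda>n. \<Sum>k\<le>2*n+1. \<Sum>j\<le>k.
            real (odd_dfact n) * g \<tau> ^ (2*n+1-k) * (-1) ^ (n+k) * \<mu>j j * \<mu> ^ (k-j)
            / (\<sigma> ^ (2*n) * fact (2*n+1-k) * fact j * fact (k-j)))
       \<and> integral\<^sup>L M (\<lambda>\<omega>. gaussQ ((g \<tau> - I \<omega>) / \<sigma>))
          = 1/2 - 1 / (sqrt (2*pi) * \<sigma>) * (\<Sum>n. \<Sum>k\<le>2*n+1. \<Sum>j\<le>k.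
            real (odd_dfact n) * g \<tau> ^ (2*n+1-k) * (-1) ^ (n+k) * \<mu>j j * \<mu> ^ (k-j)
            / (\<sigma> ^ (2*n) * fact (2*n+1-k) * fact j * fact (k-j)))
       \<and> summable (\<lambda>n. \<Sum>k\<le>2*n+1. \<Sum>j\<le>k.
            real (odd_dfact n) * g \<tau> ^ (2*n+1-k) * (-1) ^ n * \<mu>j j * \<mu> ^ (k-j)
            / (\<sigma> ^ (2*n) * fact (2*n+1-k) * fact j * fact (k-j)))
       \<and> integral\<^sup>L M (\<lambda>\<omega>. gaussQ ((g \<tau> + I \<omega>) / \<sigma>))
          = 1/2 - 1 / (sqrt (2*pi) * \<sigma>) * (\<Sum>n. \<Sum>k\<le>2*n+1. \<Sum>j\<le>k.
            real (odd_dfact n) * g \<tau> ^ (2*n+1-k) * (-1) ^ n * \<mu>j j * \<mu> ^ (k-j)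
            / (\<sigma> ^ (2*n) * fact (2*n+1-k) * fact j * fact (k-j)))"
proof -
  have Im: "I \<in> borel_measurable M"
    unfolding I_def by (rule interf_meas[OF assms(1-5) assms(7-9)])
  have iI: "integrable M (\<lambda>\<omega>. exp (l * (I \<omega>)^2))" if "0 \<le> l" for l
    unfolding I_def by (rule exp_moment[OF assms(1-5) assms(7-9) that])
  show ?thesis
    unfolding \<mu>j_def
    using assemble[OF assms(1) Im iI assms(6), of "g \<tau>" \<mu>] by simp
qed

end
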